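(* Let $n\ge1$, $f\in OSym_{n-1}$, $m\ge0$ and $1\le k\le n$. Then in the $ONH_n$-supermodule $OPol_n$, $$\tau_{k-1}\cdots\tau_1x_1^{m+k-1}\cdot\sigma_1(f)=\sum_{i=0}^{k-1}\sigma_i\big(h^{(k-i)}_{m+i}\big)\,\tau_i\cdots\tau_1\cdot\sigma_1(f),$$ where for $i=0$ the product $\tau_i\cdots\tau_1$ is interpreted as $1$.
   Context: $\Bbbk$ is a field of characteristic $\neq2$. $OPol_N$: graded superalgebra generated by odd degree-2 $x_1,\dots,x_N$ with $x_jx_i=-x_ix_j$ ($i\neq j$); $OPol_M\subseteq OPol_N$ for $M\le N$. $OSym_N\subseteq OPol_N$ is the subalgebra generated by $e^{(N)}_r:=\sum_{1\le i_1<\cdots<i_r\le N}x_{i_1}\cdots x_{i_r}$. $h^{(N)}_r:=\sum_{N\ge i_r\ge\cdots\ge i_1\ge1}x_{i_r}\cdots x_{i_1}$. $\sigma_i:OPol_{N}\to OPol_{N+i}$ is $x_j\mapsto x_{j+i}$. The odd nil-Hecke algebra $ONH_n$ is the graded superalgebra generated by odd elements $x_1,\dots,x_n$ (degree 2) and $\tau_1,\dots,\tau_{n-1}$ (degree $-2$) subject to: $x_ix_j=-x_jx_i$ ($i\ne j$); $\tau_i\tau_j=-\tau_j\tau_i$ ($|i-j|>1$); $x_i\tau_j=-\tau_jx_i$ ($i\ne j,j+1$); $\tau_j^2=0$; $\tau_j\tau_{j+1}\tau_j=-\tau_{j+1}\tau_j\tau_{j+1}$; $x_i\tau_i-\tau_ix_{i+1}=1=\tau_ix_i-x_{i+1}\tau_i$.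 It acts on $OPol_n$ with $x_i$ acting by left multiplication and $\tau_j$ acting by the odd Demazure operator $\partial_j$: the unique odd linear map with $\partial_j(x_i)=\delta_{i,j}-\delta_{i,j+1}$ and $\partial_j(fg)=\partial_j(f)g+({}^{s_j}f)\partial_j(g)$, where ${}^{s_j}$ is the superalgebra automorphism with $x_j\mapsto x_{j+1}$, $x_{j+1}\mapsto x_j$, $x_i\mapsto -x_i$ otherwise. *)

theory Defs
  imports Main
begin

text \<open>A monomial x_1^(a 1) x_2^(a 2) ... x_N^(a N) (ordered, increasing indices)
  is encoded by its exponent function a (with a 0 = 0, finite support).
  An odd polynomial is a finitely supported coefficient function on monomials.\<close>

type_synonym mon = "nat \<Rightarrow> nat"
type_synonym 'k opol = "mon \<Rightarrow> 'k"

definition opol_N :: "nat \<Rightarrow> 'k::zero opol set" where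
  "opol_N N = {p. finite {a. p a \<noteq> 0} \<and>
      (\<forall>a. p a \<noteq> 0 \<longrightarrow> (\<forall>i. a i \<noteq> 0 \<longrightarrow> 1 \<le> i \<and> i \<le> N))}"

definition ozero :: "'k::zero opol" where "ozero = (\<lambda>a. 0)"
definition oadd :: "'k::plus opol \<Rightarrow> 'k opol \<Rightarrow> 'k opol" where
  "oadd p q = (\<lambda>a. p a + q a)"
definition oneg :: "'k::uminus opol \<Rightarrow> 'k opol" where
  "oneg p = (\<lambda>a. - p a)"
definition osmul :: "'k::times \<Rightarrow> 'k opol \<Rightarrow> 'k opol" where
  "osmul c p = (\<lambda>a. c * p a)"
definition osum :: "('i \<Rightarrow> 'k::comm_monoid_add opol) \<Rightarrow> 'i set \<Rightarrow> 'k opol" where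
  "osum F I = (\<lambda>a. \<Sum>i\<in>I. F i a)"

text \<open>Sign of reordering: x^a x^b = (-1)^(sum_{i>j} a_i b_j) x^(a+b), since
  x_j x_i = - x_i x_j for i \<noteq> j.\<close>
definition msign :: "mon \<Rightarrow> mon \<Rightarrow> 'k::comm_ring_1" where
  "msign a b = (-1) ^ (\<Sum>i\<in>{i. a i \<noteq> 0}. \<Sum>j<i. a i * b j)"

definition omult :: "'k::comm_ring_1 opol \<Rightarrow> 'k opol \<Rightarrow> 'k opol" where
  "omult p q = (\<lambda>c. \<Sum>a\<in>{a. \<forall>i. a i \<le> c i}.
       msign a (\<lambda>i. c i - a i) * p a * q (\<lambda>i. c i - a i))"

definition mon_poly :: "mon \<Rightarrow> 'k::{zero,one} opol" where
  "mon_poly a = (\<lambda>b. if b = a then 1 else 0)"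

definition oone :: "'k::{zero,one} opol" where "oone = mon_poly (\<lambda>_. 0)"

definition ovar :: "nat \<Rightarrow> 'k::{zero,one} opol" where
  "ovar i = mon_poly (\<lambda>j. if j = i then 1 else 0)"

definition opow :: "'k::comm_ring_1 opol \<Rightarrow> nat \<Rightarrow> 'k opol" where
  "opow p m = (omult p ^^ m) oone"

definition word_eval :: "nat list \<Rightarrow> 'k::comm_ring_1 opol" where
  "word_eval w = foldr (\<lambda>i acc. omult (ovar i) acc) w oone"

definition mono_word :: "mon \<Rightarrow> nat list" where
  "mono_word a = concat (map (\<lambda>i. replicate (a i) i) (sorted_list_of_set {i. a i \<noteq> 0}))"

text \<open>The algebra homomorphism OPol \<rightarrow> OPol sending x_i to g i.\<close>
definition osubst :: "(nat \<Rightarrow> 'k::comm_ring_1 opol) \<Rightarrow> 'k opol \<Rightarrow> 'k opol" where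
  "osubst g p = osum (\<lambda>a. osmul (p a) (foldr (\<lambda>i acc. omult (g i) acc) (mono_word a) oone))
                      {a. p a \<noteq> 0}"

definition osigma :: "nat \<Rightarrow> 'k::comm_ring_1 opol \<Rightarrow> 'k opol" where
  "osigma i = osubst (\<lambda>j. ovar (j + i))"

definition simg :: "nat \<Rightarrow> nat \<Rightarrow> 'k::comm_ring_1 opol" where
  "simg j i = (if i = j then ovar (j + 1) else if i = j + 1 then ovar j else oneg (ovar i))"

definition osj :: "nat \<Rightarrow> 'k::comm_ring_1 opol \<Rightarrow> 'k opol" where
  "osj j = osubst (simg j)"

text \<open>Odd Demazure operator \<partial>_j, determined by \<partial>_j(x_i) = \<delta>_{i,j} - \<delta>_{i,j+1},
  linearity and \<partial>_j(fg) = \<partial>_j(f) g + (s_j f) \<partial>_j(g); on a word of generators:\<close>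
fun dem_word :: "nat \<Rightarrow> nat list \<Rightarrow> 'k::comm_ring_1 opol" where
  "dem_word j [] = ozero"
| "dem_word j (i # w) =
     oadd (osmul (if i = j then 1 else if i = j + 1 then -1 else 0) (word_eval w))
          (omult (simg j i) (dem_word j w))"

definition odem :: "nat \<Rightarrow> 'k::comm_ring_1 opol \<Rightarrow> 'k opol" where
  "odem j p = osum (\<lambda>a. osmul (p a) (dem_word j (mono_word a))) {a. p a \<noteq> 0}"

text \<open>action of \<tau>_i ... \<tau>_1 (\<tau>_1 acts first); for i = 0 it is the identity\<close>
fun odem_seq :: "nat \<Rightarrow> 'k::comm_ring_1 opol \<Rightarrow> 'k opol" where
  "odem_seq 0 p = p"
| "odem_seq (Suc i) p = odem (Suc i) (odem_seq i p)"

definition esym :: "nat \<Rightarrow> nat \<Rightarrow> 'k::comm_ring_1 opol" where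
  "esym N r = osum (\<lambda>S. word_eval (sorted_list_of_set S)) {S. S \<subseteq> {1..N} \<and> card S = r}"

definition hsym :: "nat \<Rightarrow> nat \<Rightarrow> 'k::comm_ring_1 opol" where
  "hsym N r = osum (\<lambda>l. word_eval (rev l))
                   {l. length l = r \<and> sorted l \<and> set l \<subseteq> {1..N}}"

inductive_set osym :: "nat \<Rightarrow> 'k::comm_ring_1 opol set" for N where
  gen: "esym N r \<in> osym N"
| one: "oone \<in> osym N"
| add: "p \<in> osym N \<Longrightarrow> q \<in> osym N \<Longrightarrow> oadd p q \<in> osym N"
| smul: "p \<in> osym N \<Longrightarrow> osmul c p \<in> osym N"
| mult: "p \<in> osym N \<Longrightarrow> q \<in> osym N \<Longrightarrow> omult p q \<in> osym N"

end

theory Submission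
  imports Defs "HOL-Library.Multiset" "HOL-Library.FuncSet"
begin


definition fs :: "'k::zero opol \<Rightarrow> bool" where
  "fs p \<longleftrightarrow> finite {a. p a \<noteq> 0}"
definition fsm :: "mon \<Rightarrow> bool" where
  "fsm a \<longleftrightarrow> finite {i. a i \<noteq> 0}"
definition ok :: "'k::zero opol \<Rightarrow> bool" where
  "ok p \<longleftrightarrow> fs p \<and> (\<forall>a. p a \<noteq> 0 \<longrightarrow> fsm a)"

lemma ok_fs: "ok p \<Longrightarrow> fs p" by (simp add: ok_def)

lemma osum_apply: "osum F I a = (\<Sum>i\<in>I. F i a)" by (simp add: osum_def)
lemma oadd_apply: "oadd p q a = p a + q a" by (simp add: oadd_def)
lemma osmul_apply: "osmul c p a = c * p a" by (simp add: osmul_def)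
lemma oneg_apply: "oneg p a = - p a" by (simp add: oneg_def)
lemma ozero_apply: "ozero a = 0" by (simp add: ozero_def)
lemmas oapp = osum_apply oadd_apply osmul_apply oneg_apply ozero_apply

lemma oneg_osmul: "oneg (p::'k::comm_ring_1 opol) = osmul (-1) p"
  by (simp add: oneg_def osmul_def)

lemma fs_zero[simp]: "fs ozero" by (simp add: fs_def ozero_def)
lemma ok_zero[simp]: "ok ozero" by (simp add: ok_def fs_def ozero_def)
lemma fs_mon[simp]: "fs (mon_poly a :: 'k::zero_neq_one opol)"
  by (simp add: fs_def mon_poly_def ozero_def)
lemma ok_mon[simp]: "fsm a \<Longrightarrow> ok (mon_poly a :: 'k::zero_neq_one opol)"
  by (simp add: ok_def fs_def mon_poly_def)
lemma fs_add[simp]: "fs p \<Longrightarrow> fs q \<Longrightarrow> fs (oadd p (q::'k::monoid_add opol))"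
  unfolding fs_def oadd_def
  by (rule finite_subset[of _ "{a. p a \<noteq> 0} \<union> {a. q a \<noteq> 0}"]) auto
lemma ok_add[simp]: "ok p \<Longrightarrow> ok q \<Longrightarrow> ok (oadd p (q::'k::monoid_add opol))"
  using fs_add[of p q] unfolding ok_def by (auto simp: oadd_def) (metis add.left_neutral)
lemma fs_smul[simp]: "fs p \<Longrightarrow> fs (osmul c (p::'k::semiring_0 opol))"
  unfolding fs_def osmul_def by (rule finite_subset[of _ "{a. p a \<noteq> 0}"]) auto
lemma ok_smul[simp]: "ok p \<Longrightarrow> ok (osmul c (p::'k::semiring_0 opol))"
  using fs_smul[of p c] unfolding ok_def by (auto simp: osmul_def) (metis mult_zero_right)
lemma fs_neg[simp]: "fs p \<Longrightarrow> fs (oneg (p::'k::group_add opol))"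
  unfolding fs_def oneg_def by simp
lemma ok_neg[simp]: "ok p \<Longrightarrow> ok (oneg (p::'k::group_add opol))"
  using fs_neg[of p] unfolding ok_def by (auto simp: oneg_def)
lemma osum_nz: assumes "osum F I a \<noteq> 0" obtains i where "i \<in> I" "F i a \<noteq> 0"
  using assms unfolding osum_def by (meson sum.not_neutral_contains_not_neutral)
lemma fs_osum[simp]: assumes "finite I" "\<And>i. i \<in> I \<Longrightarrow> fs (F i)" shows "fs (osum F I)"
proof -
  have "{a. osum F I a \<noteq> 0} \<subseteq> (\<Union>i\<in>I. {a. F i a \<noteq> 0})"
    by (auto elim!: osum_nz)
  then show ?thesis using assms unfolding fs_def by (meson finite_UN_I finite_subset)
qed
lemma ok_osum[simp]: assumes "finite I" "\<And>i. i \<in> I \<Longrightarrow> ok (F i)" shows "ok (osum F I)"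
proof -
  have "fsm a" if "osum F I a \<noteq> 0" for a
    using that by (rule osum_nz) (use assms in \<open>auto simp: ok_def\<close>)
  then show ?thesis using fs_osum[of I F] assms by (auto simp: ok_def)
qed

lemma fsm_add[simp]: "fsm a \<Longrightarrow> fsm b \<Longrightarrow> fsm (\<lambda>i. a i + b i)"
  unfolding fsm_def by (rule finite_subset[of _ "{i. a i \<noteq> 0} \<union> {i. b i \<noteq> 0}"]) auto

lemma finite_below:
  assumes "fsm c" shows "finite {a::mon. \<forall>i. a i \<le> c i}"
proof -
  let ?S = "{i. c i \<noteq> 0}"
  have fin: "finite ?S" using assms by (simp add: fsm_def)
  have "inj_on (\<lambda>a. restrict a ?S) {a::mon. \<forall>i. a i \<le> c i}"
  proof (rule inj_onI)
    fix a b assume a: "a \<in> {a::mon. \<forall>i. a i \<le> c i}" and b: "b \<in> {a::mon. \<forall>i. a i \<le> c i}"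
      and e: "restrict a ?S = restrict b ?S"
    show "a = b"
    proof
      fix i show "a i = b i"
      proof (cases "c i = 0")
        case True
        from a have "a i \<le> c i" by simp
        moreover from b have "b i \<le> c i" by simp
        ultimately show ?thesis using True by simp
      next
        case False then show ?thesis using fun_cong[OF e, of i] by simp
      qed
    qed
  qed
  moreover have "(\<lambda>a. restrict a ?S) ` {a::mon. \<forall>i. a i \<le> c i} \<subseteq> PiE ?S (\<lambda>i. {..c i})"
  proof
    fix y assume "y \<in> (\<lambda>a. restrict a ?S) ` {a::mon. \<forall>i. a i \<le> c i}"
    then obtain a where y: "y = restrict a ?S" and a: "\<forall>i. a i \<le> c i" by blast
    show "y \<in> PiE ?S (\<lambda>i. {..c i})" unfolding y by (simp only: restrict_PiE_iff) (use a in auto)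
  qed
  moreover have "finite (PiE ?S (\<lambda>i. {..c i}))" using fin by (intro finite_PiE) auto
  ultimately show ?thesis using finite_imageD finite_subset by blast
qed

lemma expand: fixes p :: "'k::comm_ring_1 opol" assumes "fs p" shows "p = osum (\<lambda>a. osmul (p a) (mon_poly a)) {a. p a \<noteq> 0}"
proof (rule ext)
  fix x
  have "osum (\<lambda>a. osmul (p a) (mon_poly a)) {a. p a \<noteq> 0} x = (\<Sum>i\<in>{a. p a \<noteq> 0}. if i = x then p i else 0)"
    unfolding osum_def by (rule sum.cong) (auto simp: osmul_def mon_poly_def)
  also have "\<dots> = p x" using assms by (simp add: fs_def sum.delta)
  finally show "p x = osum (\<lambda>a. osmul (p a) (mon_poly a)) {a. p a \<noteq> 0} x" by simp
qed

lemma omult_osum_left: "omult (osum F I) q = osum (\<lambda>i. omult (F i) q) I"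
  unfolding omult_def osum_def
proof (rule ext)
  fix c
  show "(\<Sum>a\<in>{a. \<forall>i. a i \<le> c i}. msign a (\<lambda>i. c i - a i) * (\<Sum>i\<in>I. F i a) * q (\<lambda>i. c i - a i)) =
    (\<Sum>i\<in>I. \<Sum>a\<in>{a. \<forall>i. a i \<le> c i}. msign a (\<lambda>i. c i - a i) * F i a * q (\<lambda>i. c i - a i))"
    by (subst sum.swap) (simp add: sum_distrib_left sum_distrib_right)
qed
lemma omult_osum_right: "omult q (osum F I) = osum (\<lambda>i. omult q (F i)) I"
  unfolding omult_def osum_def
proof (rule ext)
  fix c
  show "(\<Sum>a\<in>{a. \<forall>i. a i \<le> c i}. msign a (\<lambda>i. c i - a i) * q a * (\<Sum>i\<in>I. F i (\<lambda>i. c i - a i))) =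
    (\<Sum>i\<in>I. \<Sum>a\<in>{a. \<forall>i. a i \<le> c i}. msign a (\<lambda>i. c i - a i) * q a * F i (\<lambda>i. c i - a i))"
    by (subst sum.swap) (simp add: sum_distrib_left sum_distrib_right)
qed
lemma omult_osmul_left: "omult (osmul c p) q = osmul c (omult p q)"
  unfolding omult_def osmul_def by (rule ext) (simp add: sum_distrib_left algebra_simps)
lemma omult_osmul_right: "omult q (osmul c p) = osmul c (omult q p)"
  unfolding omult_def osmul_def by (rule ext) (simp add: sum_distrib_left algebra_simps)
lemma omult_oadd_left: "omult (oadd p p') q = oadd (omult p q) (omult p' q)"
  unfolding omult_def oadd_def by (rule ext) (simp add: sum.distrib algebra_simps)
lemma omult_oadd_right: "omult q (oadd p p') = oadd (omult q p) (omult q p')"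
  unfolding omult_def oadd_def by (rule ext) (simp add: sum.distrib algebra_simps)
lemma omult_zero_left[simp]: "omult ozero q = ozero"
  unfolding omult_def ozero_def by simp
lemma omult_zero_right[simp]: "omult q ozero = ozero"
  unfolding omult_def ozero_def by simp
lemma omult_oneg_left: "omult (oneg p) q = oneg (omult p q)"
  by (simp add: oneg_osmul omult_osmul_left)
lemma omult_oneg_right: "omult q (oneg p) = oneg (omult q p)"
  by (simp add: oneg_osmul omult_osmul_right)

lemma omult_nz:
  assumes "omult p q c \<noteq> 0"
  obtains a where "\<forall>i. a i \<le> c i" "p a \<noteq> 0" "q (\<lambda>i. c i - a i) \<noteq> 0"
proof -
  from assms obtain a where "a \<in> {a. \<forall>i. a i \<le> c i}" "msign a (\<lambda>i. c i - a i) * p a * q (\<lambda>i. c i - a i) \<noteq> 0"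
    unfolding omult_def by (meson sum.not_neutral_contains_not_neutral)
  moreover from this(2) have "p a \<noteq> 0" by (cases "p a = 0") simp_all
  moreover from calculation(2) have "q (\<lambda>i. c i - a i) \<noteq> 0" by (cases "q (\<lambda>i. c i - a i) = 0") simp_all
  ultimately show ?thesis using that by simp
qed

lemma fs_omult[simp]: assumes "fs p" "fs q" shows "fs (omult p q)"
proof -
  have "{c. omult p q c \<noteq> 0} \<subseteq> (\<lambda>(a,b). (\<lambda>i. a i + b i)) ` ({a. p a \<noteq> 0} \<times> {b. q b \<noteq> 0})"
  proof
    fix c assume "c \<in> {c. omult p q c \<noteq> 0}"
    then obtain a where a: "\<forall>i. a i \<le> c i" "p a \<noteq> 0" "q (\<lambda>i. c i - a i) \<noteq> 0"
      by (auto elim: omult_nz)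
    then have e: "c = (\<lambda>(a,b). (\<lambda>i. a i + b i)) (a, (\<lambda>i. c i - a i))" by auto
    have "(a, (\<lambda>i. c i - a i)) \<in> {a. p a \<noteq> 0} \<times> {b. q b \<noteq> 0}" using a by simp
    then show "c \<in> (\<lambda>(a,b). (\<lambda>i. a i + b i)) ` ({a. p a \<noteq> 0} \<times> {b. q b \<noteq> 0})"
      using e by (rule rev_image_eqI)
  qed
  moreover have "finite ({a. p a \<noteq> 0} \<times> {b. q b \<noteq> 0})" using assms by (simp add: fs_def)
  ultimately show ?thesis unfolding fs_def using finite_subset finite_imageI by blast
qed

lemma ok_omult[simp]: assumes "ok p" "ok q" shows "ok (omult p q)"
proof -
  have "fsm c" if nz: "omult p q c \<noteq> 0" for c
  proof -
    obtain a where a: "\<forall>i. a i \<le> c i" "p a \<noteq> 0" "q (\<lambda>i. c i - a i) \<noteq> 0"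
      using nz by (auto elim: omult_nz)
    then have e: "c = (\<lambda>i. a i + (c i - a i))" by auto
    have "fsm a" "fsm (\<lambda>i. c i - a i)" using a assms by (auto simp: ok_def)
    then have "fsm (\<lambda>i. a i + (c i - a i))" by (rule fsm_add)
    then show ?thesis using e by simp
  qed
  then show ?thesis using assms by (simp add: ok_def)
qed

lemma mon_mult:
  assumes "fsm a" "fsm b"
  shows "omult (mon_poly a) (mon_poly b) = osmul (msign a b) (mon_poly (\<lambda>i. a i + b i) :: 'k::comm_ring_1 opol)"
proof (rule ext)
  fix c
  have "omult (mon_poly a) (mon_poly b) c =
     (\<Sum>a'\<in>{a'. \<forall>i. a' i \<le> c i}. if a' = a then (if c = (\<lambda>i. a i + b i) then msign a b else 0) else (0::'k))"
    unfolding omult_def mon_poly_def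
  proof (rule sum.cong[OF refl])
    fix a' assume "a' \<in> {a'. \<forall>i. a' i \<le> c i}"
    then have le: "\<forall>i. a' i \<le> c i" by simp
    have eq: "((\<lambda>i. c i - a' i) = b) = (c = (\<lambda>i. a' i + b i))"
    proof
      assume h: "(\<lambda>i. c i - a' i) = b" show "c = (\<lambda>i. a' i + b i)"
      proof (rule ext)
        fix i show "c i = a' i + b i" using le[rule_format, of i] fun_cong[OF h, of i] by simp
      qed
    next
      assume h: "c = (\<lambda>i. a' i + b i)" show "(\<lambda>i. c i - a' i) = b"
        by (rule ext) (simp add: h)
    qed
    show "msign a' (\<lambda>i. c i - a' i) * (if a' = a then 1 else 0) * (if (\<lambda>i. c i - a' i) = b then 1 else 0) =
      (if a' = a then if c = (\<lambda>i. a i + b i) then msign a b else 0 else (0::'k))"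
    proof (cases "a' = a")
      case True
      show ?thesis
      proof (cases "c = (\<lambda>i. a i + b i)")
        case T2: True
        then have "(\<lambda>i. c i - a' i) = b" using eq True by simp
        then show ?thesis using True T2 by simp
      next
        case False
        then have "(\<lambda>i. c i - a' i) \<noteq> b" using eq \<open>a' = a\<close> by simp
        then show ?thesis using False by simp
      qed
    qed simp
  qed
  also have "\<dots> = (if c = (\<lambda>i. a i + b i) then msign a b else 0)"
  proof (cases "c = (\<lambda>i. a i + b i)")
    case True
    have "fsm (\<lambda>i. a i + b i)" using assms by simp
    then have fin: "finite {a'. \<forall>i. a' i \<le> c i}" using True by (simp add: finite_below)
    have mem: "a \<in> {a'. \<forall>i. a' i \<le> c i}" using True by simp
    have "(\<Sum>a'\<in>{a'. \<forall>i. a' i \<le> c i}. if a' = a then (if c = (\<lambda>i. a i + b i) then msign a b else 0) else (0::'k))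
       = (if a \<in> {a'. \<forall>i. a' i \<le> c i} then (if c = (\<lambda>i. a i + b i) then msign a b else 0) else 0)"
      by (rule sum.delta[OF fin])
    then show ?thesis using mem by simp
  next
    case False then show ?thesis by simp
  qed
  also have "\<dots> = osmul (msign a b) (mon_poly (\<lambda>i. a i + b i)) c"
    by (simp add: osmul_def mon_poly_def)
  finally show "omult (mon_poly a) (mon_poly b) c = osmul (msign a b) (mon_poly (\<lambda>i. a i + b i) :: 'k opol) c" .
qed


definition beta :: "mon \<Rightarrow> mon \<Rightarrow> nat" where
  "beta a b = (\<Sum>i\<in>{i. a i \<noteq> 0}. \<Sum>j<i. a i * b j)"

lemma msign_beta: "msign a b = (-1) ^ beta a b"
  by (simp add: msign_def beta_def)

lemma beta_M:
  assumes "fsm a" "{i. a i \<noteq> 0} \<subseteq> {..<M}"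
  shows "beta a b = (\<Sum>i<M. \<Sum>j<i. a i * b j)"
  unfolding beta_def
  by (rule sum.mono_neutral_left) (use assms in auto)

lemma nat_set_bound: "finite (S::nat set) \<Longrightarrow> \<exists>M. S \<subseteq> {..<M}"
  by (rule exI[of _ "Suc (Max S)"]) (auto simp: less_Suc_eq_le)
lemma fsm_bound: "fsm a \<Longrightarrow> \<exists>M. {i. a i \<noteq> 0} \<subseteq> {..<M}"
  unfolding fsm_def by (rule nat_set_bound)

lemma msign_cocycle:
  assumes a: "fsm a" and b: "fsm b" and c: "fsm c"
  shows "msign a b * msign (\<lambda>i. a i + b i) c = msign b c * (msign a (\<lambda>i. b i + c i) :: 'k::comm_ring_1)"
proof -
  obtain M1 where M1: "{i. a i \<noteq> 0} \<subseteq> {..<M1}" using fsm_bound[OF a] by blast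
  obtain M2 where M2: "{i. b i \<noteq> 0} \<subseteq> {..<M2}" using fsm_bound[OF b] by blast
  define M where "M = M1 + M2"
  have sa: "{i. a i \<noteq> 0} \<subseteq> {..<M}" using M1 by (auto simp: M_def)
  have sb: "{i. b i \<noteq> 0} \<subseteq> {..<M}" using M2 by (auto simp: M_def)
  have sab: "{i. a i + b i \<noteq> 0} \<subseteq> {..<M}" using sa sb by auto
  have e1: "beta a b = (\<Sum>i<M. \<Sum>j<i. a i * b j)" by (rule beta_M[OF a sa])
  have e2: "beta (\<lambda>i. a i + b i) c = (\<Sum>i<M. \<Sum>j<i. (a i + b i) * c j)"
    by (rule beta_M) (use a b sab in auto)
  have e3: "beta b c = (\<Sum>i<M. \<Sum>j<i. b i * c j)" by (rule beta_M[OF b sb])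
  have e4: "beta a (\<lambda>i. b i + c i) = (\<Sum>i<M. \<Sum>j<i. a i * (b j + c j))" by (rule beta_M[OF a sa])
  have "beta a b + beta (\<lambda>i. a i + b i) c = beta b c + beta a (\<lambda>i. b i + c i)"
    unfolding e1 e2 e3 e4 by (simp add: algebra_simps sum.distrib)
  then show ?thesis by (simp add: msign_beta power_add[symmetric])
qed

definition linfs :: "('k::comm_ring_1 opol \<Rightarrow> 'k opol) \<Rightarrow> bool" where
  "linfs L \<longleftrightarrow> (\<forall>(F::mon \<Rightarrow> 'k opol) I. finite I \<longrightarrow> (\<forall>i\<in>I. fs (F i)) \<longrightarrow> L (osum F I) = osum (\<lambda>i. L (F i)) I)
      \<and> (\<forall>c p. fs p \<longrightarrow> L (osmul c p) = osmul c (L p))"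

lemma linfsI:
  assumes "\<And>(F::mon \<Rightarrow> 'k::comm_ring_1 opol) I. finite I \<Longrightarrow> (\<And>i. i\<in>I \<Longrightarrow> fs (F i)) \<Longrightarrow> L (osum F I) = osum (\<lambda>i. L (F i)) I"
    and "\<And>c p. fs p \<Longrightarrow> L (osmul c p) = osmul c (L p)"
  shows "linfs L"
  unfolding linfs_def using assms by simp

lemma linfs_osum: fixes F :: "mon \<Rightarrow> 'k::comm_ring_1 opol" assumes "linfs L" "finite I" "\<And>i. i\<in>I \<Longrightarrow> fs (F i)" shows "L (osum F I) = osum (\<lambda>i. L (F i)) I"
proof -
  have X: "\<forall>(F::mon \<Rightarrow> 'k opol) I. finite I \<longrightarrow> (\<forall>i\<in>I. fs (F i)) \<longrightarrow> L (osum F I) = osum (\<lambda>i. L (F i)) I"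
    using assms(1) by (simp add: linfs_def)
  show ?thesis by (rule X[rule_format]) (use assms in auto)
qed
lemma linfs_osmul: assumes "linfs L" "fs p" shows "L (osmul c p) = osmul c (L p)"
proof -
  have X: "\<forall>c p. fs p \<longrightarrow> L (osmul c p) = osmul c (L p)"
    using assms(1) by (simp add: linfs_def)
  show ?thesis by (rule X[rule_format]) (use assms in auto)
qed

lemma lin_ext:
  assumes L: "linfs L" and L': "linfs L'" and mon: "\<And>a. fsm a \<Longrightarrow> L (mon_poly a) = L' (mon_poly a)"
    and p: "ok p"
  shows "L p = L' p"
proof -
  let ?S = "{a. p a \<noteq> 0}"
  have fin: "finite ?S" using p by (simp add: ok_def fs_def)
  have e: "p = osum (\<lambda>a. osmul (p a) (mon_poly a)) ?S" using p by (simp add: ok_fs expand)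
  have "L p = osum (\<lambda>a. L (osmul (p a) (mon_poly a))) ?S"
    by (subst e, rule linfs_osum[OF L fin]) simp
  also have "\<dots> = osum (\<lambda>a. osmul (p a) (L (mon_poly a))) ?S"
    by (simp add: linfs_osmul[OF L])
  also have "\<dots> = osum (\<lambda>a. osmul (p a) (L' (mon_poly a))) ?S"
  proof -
    have "\<And>a. a \<in> ?S \<Longrightarrow> fsm a" using p by (simp add: ok_def)
    then show ?thesis unfolding osum_def by (intro ext sum.cong) (simp_all add: mon)
  qed
  also have "\<dots> = osum (\<lambda>a. L' (osmul (p a) (mon_poly a))) ?S"
    by (simp add: linfs_osmul[OF L'])
  also have "\<dots> = L' p"
    by (subst (2) e, rule linfs_osum[OF L' fin, symmetric]) simp
  finally show ?thesis .
qed

lemma linfs_mult_left: "linfs (\<lambda>p. omult p q)"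
  by (rule linfsI) (simp_all add: omult_osum_left omult_osmul_left)
lemma linfs_mult_right: "linfs (\<lambda>p. omult q p)"
  by (rule linfsI) (simp_all add: omult_osum_right omult_osmul_right)
lemma linfs_id: "linfs (\<lambda>p. p)"
  by (rule linfsI) simp_all
lemma linfs_comp:
  assumes "linfs L1" "linfs L2" "\<And>p. fs p \<Longrightarrow> fs (L2 p)"
  shows "linfs (\<lambda>p. L1 (L2 p))"
proof (rule linfsI)
  fix F :: "mon \<Rightarrow> 'a opol" and I assume "finite I" "\<And>i. i \<in> I \<Longrightarrow> fs (F i)"
  then show "L1 (L2 (osum F I)) = osum (\<lambda>i. L1 (L2 (F i))) I"
    using assms by (simp add: linfs_osum)
next
  fix c and p :: "'a opol" assume "fs p"
  then show "L1 (L2 (osmul c p)) = osmul c (L1 (L2 p))"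
    using assms by (simp add: linfs_osmul)
qed

lemma osum_oadd: "osum (\<lambda>i. oadd (F i) (G i)) I = oadd (osum F I) (osum G I)"
  by (simp add: osum_def oadd_def sum.distrib)
lemma osmul_oadd: "osmul c (oadd p q) = oadd (osmul c p) (osmul (c::'k::comm_ring_1) q)"
  by (simp add: osmul_def oadd_def algebra_simps)

lemma linfs_add:
  assumes "linfs L1" "linfs L2"
  shows "linfs (\<lambda>p. oadd (L1 p) (L2 p))"
proof (rule linfsI)
  fix F :: "mon \<Rightarrow> 'a opol" and I assume "finite I" "\<And>i. i \<in> I \<Longrightarrow> fs (F i)"
  then show "oadd (L1 (osum F I)) (L2 (osum F I)) = osum (\<lambda>i. oadd (L1 (F i)) (L2 (F i))) I"
    using assms by (simp add: linfs_osum osum_oadd)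
next
  fix c and p :: "'a opol" assume "fs p"
  then show "oadd (L1 (osmul c p)) (L2 (osmul c p)) = osmul c (oadd (L1 p) (L2 p))"
    using assms by (simp add: linfs_osmul osmul_oadd)
qed

lemma osmul_osmul: "osmul c (osmul d p) = osmul (c * d) (p::'k::comm_ring_1 opol)"
  by (simp add: osmul_def mult.assoc)

lemma assoc_mon:
  assumes "fsm a" "fsm b" "fsm c"
  shows "omult (omult (mon_poly a) (mon_poly b)) (mon_poly c) = omult (mon_poly a) (omult (mon_poly b) (mon_poly c) :: 'k::comm_ring_1 opol)"
proof -
  have "omult (omult (mon_poly a) (mon_poly b)) (mon_poly c) =
     osmul (msign a b * msign (\<lambda>i. a i + b i) c) (mon_poly (\<lambda>i. a i + b i + c i) :: 'k opol)"
    using assms by (simp add: mon_mult omult_osmul_left osmul_osmul)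
  also have "\<dots> = osmul (msign b c * msign a (\<lambda>i. b i + c i)) (mon_poly (\<lambda>i. a i + (b i + c i)))"
  proof -
    have "msign a b * msign (\<lambda>i. a i + b i) c = (msign b c * msign a (\<lambda>i. b i + c i) :: 'k)"
      by (rule msign_cocycle[OF assms])
    then show ?thesis by (simp add: add.assoc)
  qed
  also have "\<dots> = omult (mon_poly a) (omult (mon_poly b) (mon_poly c))"
    using assms by (simp add: mon_mult omult_osmul_right osmul_osmul)
  finally show ?thesis .
qed

lemma assoc:
  fixes p q r :: "'k::comm_ring_1 opol"
  assumes "ok p" "ok q" "ok r"
  shows "omult (omult p q) r = omult p (omult q r)"
proof -
  have A1: "omult (omult (mon_poly a) (mon_poly b)) r = omult (mon_poly a) (omult (mon_poly b) r)"
    if "fsm a" "fsm b" for a b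
  proof (rule lin_ext[where L="\<lambda>r. omult (omult (mon_poly a) (mon_poly b)) r"
        and L'="\<lambda>r. omult (mon_poly a) (omult (mon_poly b) r)"])
    show "linfs (\<lambda>r. omult (mon_poly a) (omult (mon_poly b) r) :: 'k opol)"
      by (rule linfs_comp[OF linfs_mult_right linfs_mult_right]) simp
  qed (use that assms assoc_mon in \<open>simp_all add: linfs_mult_right\<close>)
  have A2: "omult (omult (mon_poly a) q) r = omult (mon_poly a) (omult q r)"
    if "fsm a" for a
  proof (rule lin_ext[where L="\<lambda>q. omult (omult (mon_poly a) q) r"
        and L'="\<lambda>q. omult (mon_poly a) (omult q r)"])
    show "linfs (\<lambda>q. omult (omult (mon_poly a) q) r :: 'k opol)"
      by (rule linfs_comp[OF linfs_mult_left linfs_mult_right]) simp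
    show "linfs (\<lambda>q. omult (mon_poly a) (omult q r) :: 'k opol)"
      by (rule linfs_comp[OF linfs_mult_right linfs_mult_left]) (use assms in \<open>simp add: ok_fs\<close>)
  qed (use that assms A1 in simp_all)
  show ?thesis
  proof (rule lin_ext[where L="\<lambda>p. omult (omult p q) r" and L'="\<lambda>p. omult p (omult q r)"])
    show "linfs (\<lambda>p. omult (omult p q) r :: 'k opol)"
      by (rule linfs_comp[OF linfs_mult_left linfs_mult_left]) (use assms in \<open>simp add: ok_fs\<close>)
  qed (use assms A2 in \<open>simp_all add: linfs_mult_left\<close>)
qed


definition lext :: "(mon \<Rightarrow> 'k::comm_ring_1 opol) \<Rightarrow> 'k opol \<Rightarrow> 'k opol" where
  "lext \<Phi> p = osum (\<lambda>a. osmul (p a) (\<Phi> a)) {a. p a \<noteq> 0}"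

lemma lext_super:
  assumes "finite T" "{a. p a \<noteq> 0} \<subseteq> T"
  shows "lext \<Phi> p = osum (\<lambda>a. osmul (p a) (\<Phi> a)) T"
  unfolding lext_def osum_def
proof (rule ext)
  fix x show "(\<Sum>a\<in>{a. p a \<noteq> 0}. osmul (p a) (\<Phi> a) x) = (\<Sum>a\<in>T. osmul (p a) (\<Phi> a) x)"
    by (rule sum.mono_neutral_left) (use assms in \<open>auto simp: osmul_def\<close>)
qed

lemma lext_osum:
  fixes F :: "'i \<Rightarrow> 'k::comm_ring_1 opol"
  assumes I: "finite I" and F: "\<And>i. i \<in> I \<Longrightarrow> fs (F i)"
  shows "lext \<Phi> (osum F I) = osum (\<lambda>i. lext \<Phi> (F i)) I"
proof -
  define T where "T = (\<Union>i\<in>I. {a. F i a \<noteq> 0})"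
  have T: "finite T" using I F by (auto simp: T_def fs_def)
  have s1: "{a. osum F I a \<noteq> 0} \<subseteq> T" by (auto simp: T_def elim!: osum_nz)
  have s2: "\<And>i. i \<in> I \<Longrightarrow> {a. F i a \<noteq> 0} \<subseteq> T" by (auto simp: T_def)
  have "lext \<Phi> (osum F I) = osum (\<lambda>a. osmul (osum F I a) (\<Phi> a)) T" by (rule lext_super[OF T s1])
  also have "\<dots> = osum (\<lambda>i. osum (\<lambda>a. osmul (F i a) (\<Phi> a)) T) I"
    unfolding osum_def osmul_def
    by (rule ext, subst sum.swap) (simp add: sum_distrib_right)
  also have "\<dots> = osum (\<lambda>i. lext \<Phi> (F i)) I"
    unfolding osum_def by (intro ext sum.cong refl) (simp add: lext_super[OF T s2] osum_def)
  finally show ?thesis .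
qed

lemma lext_osmul:
  assumes "fs p" shows "lext \<Phi> (osmul c p) = osmul c (lext \<Phi> p)"
proof -
  have T: "finite {a. p a \<noteq> 0}" using assms by (simp add: fs_def)
  have s: "{a. osmul c p a \<noteq> 0} \<subseteq> {a. p a \<noteq> 0}" by (auto simp: osmul_def)
  have "lext \<Phi> (osmul c p) = osum (\<lambda>a. osmul (osmul c p a) (\<Phi> a)) {a. p a \<noteq> 0}"
    by (rule lext_super[OF T s])
  then show ?thesis
    by (simp add: lext_def osum_def osmul_def sum_distrib_left mult.assoc)
qed

lemma lext_oadd:
  assumes "fs p" "fs q" shows "lext \<Phi> (oadd p q) = oadd (lext \<Phi> p) (lext \<Phi> q)"
proof -
  let ?T = "{a. p a \<noteq> 0} \<union> {a. q a \<noteq> 0}"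
  have T: "finite ?T" using assms by (simp add: fs_def)
  have s: "{a. oadd p q a \<noteq> 0} \<subseteq> ?T" "{a. p a \<noteq> 0} \<subseteq> ?T" "{a. q a \<noteq> 0} \<subseteq> ?T"
    by (auto simp: oadd_def)
  have e1: "lext \<Phi> (oadd p q) = osum (\<lambda>a. osmul (oadd p q a) (\<Phi> a)) ?T" by (rule lext_super[OF T s(1)])
  have e2: "lext \<Phi> p = osum (\<lambda>a. osmul (p a) (\<Phi> a)) ?T" by (rule lext_super[OF T s(2)])
  have e3: "lext \<Phi> q = osum (\<lambda>a. osmul (q a) (\<Phi> a)) ?T" by (rule lext_super[OF T s(3)])
  show ?thesis unfolding e1 e2 e3
    by (simp add: osum_def osmul_def oadd_def sum.distrib algebra_simps)
qed

lemma lext_oneg: "fs p \<Longrightarrow> lext \<Phi> (oneg p) = oneg (lext \<Phi> p)"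
  by (simp add: oneg_osmul lext_osmul)

lemma lext_zero[simp]: "lext \<Phi> ozero = ozero"
  by (simp add: lext_def ozero_def osum_def)

lemma lext_mon[simp]: "lext \<Phi> (mon_poly a) = (\<Phi> a :: 'k::comm_ring_1 opol)"
proof -
  have "{b. (mon_poly a :: 'k opol) b \<noteq> 0} = {a}" by (auto simp: mon_poly_def)
  then show ?thesis by (simp add: lext_def osum_def osmul_def mon_poly_def)
qed

lemma linfs_lext: "linfs (lext \<Phi>)"
  by (rule linfsI) (simp_all add: lext_osum lext_osmul)

lemma fs_lext[simp]: assumes "\<And>a. fs (\<Phi> a)" shows "fs (lext \<Phi> p)"
proof (cases "finite {a. p a \<noteq> 0}")
  case True then show ?thesis using assms by (simp add: lext_def)
next
  case False then have "lext \<Phi> p = ozero" by (simp add: lext_def osum_def ozero_def)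
  then show ?thesis by simp
qed

lemma ok_lext[simp]: assumes "\<And>a. ok (\<Phi> a)" shows "ok (lext \<Phi> p)"
proof (cases "finite {a. p a \<noteq> 0}")
  case True then show ?thesis using assms by (simp add: lext_def)
next
  case False then have "lext \<Phi> p = ozero" by (simp add: lext_def osum_def ozero_def)
  then show ?thesis by simp
qed


definition gword :: "(nat \<Rightarrow> 'k::comm_ring_1 opol) \<Rightarrow> nat list \<Rightarrow> 'k opol" where
  "gword g w = foldr (\<lambda>i acc. omult (g i) acc) w oone"

lemma gword_Nil[simp]: "gword g [] = oone" by (simp add: gword_def)
lemma gword_Cons[simp]: "gword g (i # w) = omult (g i) (gword g w)" by (simp add: gword_def)
lemma word_eval_gword: "word_eval = gword ovar"
  by (rule ext) (simp add: word_eval_def gword_def)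
lemma word_eval_Nil[simp]: "word_eval [] = oone" by (simp add: word_eval_def)
lemma word_eval_Cons[simp]: "word_eval (i # w) = omult (ovar i) (word_eval w)" by (simp add: word_eval_def)

lemma osubst_lext: "osubst g = lext (\<lambda>a. gword g (mono_word a))"
  by (rule ext) (simp add: osubst_def lext_def gword_def)
lemma odem_lext: "odem j = lext (\<lambda>a. dem_word j (mono_word a))"
  by (rule ext) (simp add: odem_def lext_def)

definition cnt :: "nat list \<Rightarrow> mon" where "cnt w = (\<lambda>i. count_list w i)"
definition unit :: "nat \<Rightarrow> mon" where "unit l = (\<lambda>j. if j = l then 1 else 0)"
definition lt :: "nat \<Rightarrow> nat list \<Rightarrow> nat" where "lt l w = length (filter (\<lambda>y. y < l) w)"
fun ninv :: "nat list \<Rightarrow> nat" where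
  "ninv [] = 0"
| "ninv (l # w) = lt l w + ninv w"
definition wsign :: "nat list \<Rightarrow> 'k::comm_ring_1" where "wsign w = (-1) ^ ninv w"

lemma ovar_unit: "ovar l = mon_poly (unit l)" by (simp add: ovar_def unit_def)
lemma oone_mon: "oone = mon_poly (\<lambda>_. 0)" by (simp add: oone_def)

lemma fsm_unit[simp]: "fsm (unit l)"
proof -
  have "{i. unit l i \<noteq> 0} = {l}" by (auto simp: unit_def)
  then show ?thesis by (simp add: fsm_def)
qed
lemma fsm_cnt[simp]: "fsm (cnt w)"
proof -
  have "{i. cnt w i \<noteq> 0} \<subseteq> set w" by (auto simp: cnt_def count_list_0_iff)
  then show ?thesis unfolding fsm_def by (rule finite_subset) simp
qed
lemma fsm_zero[simp]: "fsm (\<lambda>_. 0)" by (simp add: fsm_def)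

lemma cnt_Nil[simp]: "cnt [] = (\<lambda>_. 0)" by (simp add: cnt_def)
lemma cnt_Cons: "cnt (l # w) = (\<lambda>i. unit l i + cnt w i)"
  by (rule ext) (simp add: cnt_def unit_def)

lemma lt_sum: "lt l w = (\<Sum>j<l. cnt w j)"
proof (induction w)
  case Nil then show ?case by (simp add: lt_def cnt_def)
next
  case (Cons a w)
  have "(\<Sum>j<l. cnt (a # w) j) = (\<Sum>j<l. cnt w j + (if j = a then 1 else 0))"
    by (rule sum.cong) (auto simp: cnt_def)
  also have "\<dots> = (\<Sum>j<l. cnt w j) + (if a < l then 1 else 0)"
    by (simp add: sum.distrib)
  finally show ?case using Cons by (simp add: lt_def)
qed

lemma msign_unit: "msign (unit l) c = (-1) ^ (\<Sum>j<l. c j)"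
proof -
  have "{i. unit l i \<noteq> 0} = {l}" by (auto simp: unit_def)
  then show ?thesis by (simp add: msign_def unit_def)
qed

lemma W1: "word_eval w = osmul (wsign w) (mon_poly (cnt w) :: 'k::comm_ring_1 opol)"
proof (induction w)
  case Nil then show ?case by (simp add: wsign_def oone_def osmul_def)
next
  case (Cons l w)
  have "word_eval (l # w) = omult (mon_poly (unit l)) (osmul (wsign w) (mon_poly (cnt w)) :: 'k opol)"
    by (simp add: Cons ovar_unit)
  also have "\<dots> = osmul (wsign w * msign (unit l) (cnt w)) (mon_poly (cnt (l # w)))"
    by (simp add: omult_osmul_right mon_mult osmul_osmul cnt_Cons)
  also have "wsign w * msign (unit l) (cnt w) = (wsign (l # w) :: 'k)"
    by (simp add: wsign_def msign_unit lt_sum power_add)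
  finally show ?case .
qed

lemma count_concat: "count_list (concat (map f L)) x = sum_list (map (\<lambda>i. count_list (f i) x) L)"
  by (induction L) simp_all
lemma count_replicate: "count_list (replicate n i) x = (if i = x then n else 0)"
  by (induction n) auto

lemma cnt_mono_word: assumes "fsm a" shows "cnt (mono_word a) = a"
proof (rule ext)
  fix x
  let ?S = "{i. a i \<noteq> 0}"
  have fin: "finite ?S" using assms by (simp add: fsm_def)
  have "cnt (mono_word a) x = sum_list (map (\<lambda>i. if i = x then a i else 0) (sorted_list_of_set ?S))"
    by (simp add: cnt_def mono_word_def count_concat count_replicate)
  also have "\<dots> = (\<Sum>i\<in>?S. if i = x then a i else 0)"
    using fin by (simp add: sum_list_distinct_conv_sum_set)
  also have "\<dots> = a x" using fin by (simp add: sum.delta)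
  finally show "cnt (mono_word a) x = a x" .
qed

lemma sorted_concat_rep: "sorted L \<Longrightarrow> sorted (concat (map (\<lambda>i. replicate (f i) i) L))"
proof (induction L)
  case Nil then show ?case by simp
next
  case (Cons i L)
  then show ?case by (auto simp: sorted_append)
qed

lemma sorted_mono_word: "sorted (mono_word a)"
  unfolding mono_word_def by (rule sorted_concat_rep) simp

lemma ninv_sorted: "sorted w \<Longrightarrow> ninv w = 0"
proof (induction w)
  case Nil then show ?case by simp
next
  case (Cons l w)
  have "filter (\<lambda>y. y < l) w = []" using Cons.prems by (auto simp: filter_empty_conv)
  then show ?case using Cons by (simp add: lt_def)
qed

lemma wsign_sorted: "sorted w \<Longrightarrow> wsign w = 1"
  by (simp add: wsign_def ninv_sorted)

lemma wsign_sq: "wsign w * wsign w = (1::'k::comm_ring_1)"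
  by (simp add: wsign_def power_mult_distrib[symmetric])

lemma mono_eval: "fsm a \<Longrightarrow> word_eval (mono_word a) = (mon_poly a :: 'k::comm_ring_1 opol)"
  by (simp add: W1 cnt_mono_word wsign_sorted sorted_mono_word osmul_def)

lemma cnt_mset: "cnt w = (\<lambda>i. count (mset w) i)"
  by (simp add: cnt_def count_mset)

lemma mono_word_cnt: "mono_word (cnt w) = sort w"
proof (rule properties_for_sort[symmetric])
  show "mset (mono_word (cnt w)) = mset w"
  proof (rule multiset_eqI)
    fix x show "count (mset (mono_word (cnt w))) x = count (mset w) x"
    proof -
      have e: "cnt (mono_word (cnt w)) = cnt w" by (rule cnt_mono_word) simp
      show ?thesis using fun_cong[OF e, of x] by (simp add: cnt_def count_mset)
    qed
  qed
qed (rule sorted_mono_word)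

lemma cnt_perm: "mset u = mset v \<Longrightarrow> cnt u = cnt v"
  unfolding cnt_mset by simp

lemma lt_perm: assumes "mset u = mset v" shows "lt l u = lt l v"
  unfolding lt_sum using cnt_perm[OF assms] by simp

lemma eval_perm: assumes "mset u = mset v" shows "word_eval u = osmul (wsign u * wsign v) (word_eval v :: 'k::comm_ring_1 opol)"
proof -
  have "word_eval v = osmul (wsign v) (mon_poly (cnt u) :: 'k opol)" using cnt_perm[OF assms] W1[of v] by simp
  then show ?thesis
    by (simp add: W1[of u] osmul_osmul mult.assoc wsign_sq)
qed

lemma perm_gen:
  fixes \<Phi> :: "nat list \<Rightarrow> 'k::comm_ring_1 opol"
  assumes swap: "\<And>i y w. i \<noteq> y \<Longrightarrow> \<Phi> (i # y # w) = oneg (\<Phi> (y # i # w))"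
    and cong: "\<And>y u u' c. mset u = mset u' \<Longrightarrow> \<Phi> u = osmul c (\<Phi> u') \<Longrightarrow>
        word_eval u = osmul c (word_eval u') \<Longrightarrow> \<Phi> (y # u) = osmul c (\<Phi> (y # u'))"
  shows "\<Phi> w = osmul (wsign w) (\<Phi> (sort w))"
proof -
  have ins: "\<Phi> (l # v) = osmul ((-1) ^ lt l v) (\<Phi> (insort l v))" if "sorted v" for l v
    using that
  proof (induction v)
    case Nil then show ?case by (simp add: lt_def osmul_def)
  next
    case (Cons y v)
    have sv: "sorted v" and yv: "\<forall>z\<in>set v. y \<le> z" using Cons.prems by auto
    show ?case
    proof (cases "l \<le> y")
      case True
      then have "lt l (y # v) = 0" using yv by (auto simp: lt_def filter_empty_conv)
      then show ?thesis using True by (simp add: osmul_def)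
    next
      case False
      then have ly: "l \<noteq> y" and ins: "insort l (y # v) = y # insort l v" by auto
      have lt: "lt l (y # v) = Suc (lt l v)" using False by (simp add: lt_def)
      have IH: "\<Phi> (l # v) = osmul ((-1) ^ lt l v) (\<Phi> (insort l v))" by (rule Cons.IH[OF sv])
      have ms: "mset (l # v) = mset (insort l v)" by simp
      have ev: "word_eval (l # v) = osmul ((-1) ^ lt l v) (word_eval (insort l v) :: 'k opol)"
      proof -
        have "wsign (insort l v) = (1::'k)" by (rule wsign_sorted) (simp add: sv sorted_insort)
        moreover have "wsign (l # v) = ((-1) ^ lt l v :: 'k)" by (simp add: wsign_def ninv_sorted[OF sv])
        ultimately show ?thesis using eval_perm[OF ms, where 'k='k] by simp
      qed
      have "\<Phi> (l # y # v) = oneg (\<Phi> (y # l # v))" by (rule swap[OF ly])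
      also have "\<Phi> (y # l # v) = osmul ((-1) ^ lt l v) (\<Phi> (y # insort l v))"
        by (rule cong[OF ms IH ev])
      finally show ?thesis using ins lt by (simp add: oneg_osmul osmul_osmul)
    qed
  qed
  show ?thesis
  proof (induction w)
    case Nil then show ?case by (simp add: wsign_def osmul_def)
  next
    case (Cons l w)
    have ms: "mset w = mset (sort w)" by simp
    have ev: "word_eval w = osmul (wsign w) (word_eval (sort w) :: 'k opol)"
      using eval_perm[OF ms, where 'k='k] by (simp add: wsign_sorted)
    have "\<Phi> (l # w) = osmul (wsign w) (\<Phi> (l # sort w))" by (rule cong[OF ms Cons.IH ev])
    also have "\<Phi> (l # sort w) = osmul ((-1) ^ lt l (sort w)) (\<Phi> (insort l (sort w)))"
      by (rule ins) simp
    finally show ?case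
      by (simp add: osmul_osmul lt_perm[OF ms, symmetric] wsign_def power_add mult.commute)
  qed
qed

definition anticomm :: "(nat \<Rightarrow> 'k::comm_ring_1 opol) \<Rightarrow> bool" where
  "anticomm g \<longleftrightarrow> (\<forall>i. ok (g i)) \<and> (\<forall>i y. i \<noteq> y \<longrightarrow> omult (g i) (g y) = oneg (omult (g y) (g i)))"

lemma ok_oone[simp]: "ok (oone :: 'k::comm_ring_1 opol)" by (simp add: oone_def)

lemma ok_gword[simp]: "(\<And>i. ok (g i)) \<Longrightarrow> ok (gword g w)"
  by (induction w) simp_all

lemma gword_perm:
  assumes "anticomm g"
  shows "gword g w = osmul (wsign w) (gword g (sort w))"
proof (rule perm_gen[where \<Phi>="gword g"])
  have okg: "\<And>i. ok (g i)" using assms unfolding anticomm_def by blast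
  fix i y :: nat and w :: "nat list" assume "i \<noteq> y"
  have X: "\<forall>i y. i \<noteq> y \<longrightarrow> omult (g i) (g y) = oneg (omult (g y) (g i))"
    using assms unfolding anticomm_def by (rule conjunct2)
  have ac: "omult (g i) (g y) = oneg (omult (g y) (g i))" using X \<open>i \<noteq> y\<close> by blast
  have okw: "ok (gword g w)" using okg by simp
  have "gword g (i # y # w) = omult (g i) (omult (g y) (gword g w))" by simp
  also have "\<dots> = omult (omult (g i) (g y)) (gword g w)"
    by (rule assoc[symmetric]) (simp_all add: okg okw)
  also have "\<dots> = oneg (omult (omult (g y) (g i)) (gword g w))" by (simp only: ac omult_oneg_left)
  also have "omult (omult (g y) (g i)) (gword g w) = omult (g y) (omult (g i) (gword g w))"
    by (rule assoc) (simp_all add: okg okw)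
  also have "omult (g y) (omult (g i) (gword g w)) = gword g (y # i # w)" by simp
  finally show "gword g (i # y # w) = oneg (gword g (y # i # w))" .
next
  fix y u u' c assume "gword g u = osmul c (gword g u')"
  then show "gword g (y # u) = osmul c (gword g (y # u'))" by (simp add: omult_osmul_right)
qed


lemma ok_ovar[simp]: "ok (ovar l :: 'k::comm_ring_1 opol)" by (simp add: ovar_unit)
lemma fs_ovar[simp]: "fs (ovar l :: 'k::comm_ring_1 opol)" by (simp add: ovar_unit)

lemma oone_left: assumes "ok p" shows "omult oone p = (p :: 'k::comm_ring_1 opol)"
proof (rule lin_ext[where L="\<lambda>p. omult oone p" and L'="\<lambda>p. p", OF linfs_mult_right linfs_id _ assms])
  fix a :: mon assume "fsm a"
  then show "omult oone (mon_poly a) = (mon_poly a :: 'k opol)"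
    by (simp add: oone_mon mon_mult msign_def osmul_def)
qed

lemma oone_right: assumes "ok p" shows "omult p oone = (p :: 'k::comm_ring_1 opol)"
proof (rule lin_ext[where L="\<lambda>p. omult p oone" and L'="\<lambda>p. p", OF linfs_mult_left linfs_id _ assms])
  fix a :: mon assume "fsm a"
  then show "omult (mon_poly a) oone = (mon_poly a :: 'k opol)"
    by (simp add: oone_mon mon_mult msign_def osmul_def)
qed

lemma ok_word_eval[simp]: "ok (word_eval w :: 'k::comm_ring_1 opol)"
  by (simp add: word_eval_gword)

lemma eval_append: "word_eval (u @ v) = omult (word_eval u) (word_eval v :: 'k::comm_ring_1 opol)"
proof (induction u)
  case Nil then show ?case by (simp add: oone_left)
next
  case (Cons l u) then show ?case by (simp add: assoc)
qed

lemma gword_append: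
  assumes "\<And>i. ok (g i)"
  shows "gword g (u @ v) = omult (gword g u) (gword g v :: 'k::comm_ring_1 opol)"
proof (induction u)
  case Nil then show ?case using assms by (simp add: oone_left)
next
  case (Cons l u) then show ?case using assms by (simp add: assoc)
qed

lemma osubst_word:
  assumes "anticomm g"
  shows "osubst g (word_eval w) = gword g w"
proof -
  have "osubst g (word_eval w) = osmul (wsign w) (gword g (mono_word (cnt w)))"
    by (simp add: osubst_lext W1[of w] lext_osmul)
  also have "\<dots> = gword g w" using gword_perm[OF assms, of w]
    by (simp add: mono_word_cnt osmul_osmul wsign_sq)
  finally show ?thesis .
qed

lemma linfs_osubst: "linfs (osubst g)" by (simp add: osubst_lext linfs_lext)

lemma ok_osubst[simp]: "(\<And>i. ok (g i)) \<Longrightarrow> ok (osubst g p)"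
  by (simp add: osubst_lext)

lemma osubst_var_mult:
  assumes g: "anticomm g" and P: "ok P"
  shows "osubst g (omult (ovar l) P) = omult (g l) (osubst g P)"
proof -
  have okg: "\<And>i. ok (g i)" using g unfolding anticomm_def by blast
  show ?thesis
  proof (rule lin_ext[where L="\<lambda>P. osubst g (omult (ovar l) P)" and L'="\<lambda>P. omult (g l) (osubst g P)", OF _ _ _ P])
    show "linfs (\<lambda>P. osubst g (omult (ovar l) P))"
      by (rule linfs_comp[OF linfs_osubst linfs_mult_right]) simp
    show "linfs (\<lambda>P. omult (g l) (osubst g P))"
      by (rule linfs_comp[OF linfs_mult_right linfs_osubst]) (simp add: ok_fs okg)
    fix b :: mon assume b: "fsm b"
    have e: "omult (ovar l) (mon_poly b) = word_eval (l # mono_word b)"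
      using b by (simp add: mono_eval)
    have "osubst g (omult (ovar l) (mon_poly b)) = gword g (l # mono_word b)"
      unfolding e by (rule osubst_word[OF g])
    also have "\<dots> = omult (g l) (osubst g (mon_poly b))" by (simp add: osubst_lext)
    finally show "osubst g (omult (ovar l) (mon_poly b)) = omult (g l) (osubst g (mon_poly b))" .
  qed
qed

lemma osubst_id: assumes "ok p" shows "osubst ovar p = (p :: 'k::comm_ring_1 opol)"
proof (rule lin_ext[where L="osubst ovar" and L'="\<lambda>p. p", OF linfs_osubst linfs_id _ assms])
  fix a :: mon assume "fsm a"
  then show "osubst ovar (mon_poly a) = (mon_poly a :: 'k opol)"
    by (simp add: osubst_lext word_eval_gword[symmetric] mono_eval)
qed

lemma sum_unit: "(\<Sum>j<i. unit y j) = (if y < i then 1 else 0)"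
proof -
  have "(\<Sum>j<i. unit y j) = (\<Sum>j<i. if j = y then 1 else 0)" by (simp add: unit_def)
  also have "\<dots> = (if y < i then 1 else 0)" by (simp add: sum.delta)
  finally show ?thesis .
qed

lemma var_anti:
  assumes "i \<noteq> y"
  shows "omult (ovar i) (ovar y) = oneg (omult (ovar y) (ovar i) :: 'k::comm_ring_1 opol)"
proof -
  have c: "(\<lambda>k. unit i k + unit y k) = (\<lambda>k. unit y k + unit i k)" by (auto simp: add.commute)
  have "(-1::'k) ^ (if y < i then 1 else 0) = - ((-1) ^ (if i < y then 1 else 0))"
    using assms by auto
  then show ?thesis
    by (simp add: ovar_unit mon_mult msign_unit sum_unit c oneg_osmul osmul_osmul)
qed

definition sw :: "nat \<Rightarrow> nat \<Rightarrow> nat" where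
  "sw j i = (if i = j then j + 1 else if i = j + 1 then j else i)"
definition sg :: "nat \<Rightarrow> nat \<Rightarrow> 'k::comm_ring_1" where
  "sg j i = (if i = j \<or> i = j + 1 then 1 else -1)"

lemma simg_sw: "simg j i = osmul (sg j i) (ovar (sw j i) :: 'k::comm_ring_1 opol)"
  by (auto simp: simg_def sg_def sw_def oneg_osmul osmul_def)

lemma sw_inj: "i \<noteq> y \<Longrightarrow> sw j i \<noteq> sw j y"
  by (auto simp: sw_def)

lemma anticomm_simg: "anticomm (simg j :: nat \<Rightarrow> 'k::comm_ring_1 opol)"
  unfolding anticomm_def
proof (intro conjI allI impI)
  fix i show "ok (simg j i :: 'k opol)" by (simp add: simg_sw)
next
  fix i y :: nat assume "i \<noteq> y"
  then have "sw j i \<noteq> sw j y" by (rule sw_inj)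
  then have v: "omult (ovar (sw j i)) (ovar (sw j y)) = oneg (omult (ovar (sw j y)) (ovar (sw j i)) :: 'k opol)"
    by (rule var_anti)
  have "omult (simg j i) (simg j y) = osmul (sg j i * sg j y) (omult (ovar (sw j i)) (ovar (sw j y)) :: 'k opol)"
    by (simp add: simg_sw omult_osmul_left omult_osmul_right osmul_osmul mult.commute)
  also have "\<dots> = osmul (sg j i * sg j y) (oneg (omult (ovar (sw j y)) (ovar (sw j i))))" by (simp only: v)
  also have "\<dots> = oneg (omult (simg j y) (simg j i))"
    by (simp add: simg_sw omult_osmul_left omult_osmul_right osmul_osmul oneg_osmul mult.commute mult.left_commute)
  finally show "omult (simg j i) (simg j y) = oneg (omult (simg j y) (simg j i) :: 'k opol)" .
qed

lemma anticomm_shift: "anticomm (\<lambda>l. ovar (l + i) :: 'k::comm_ring_1 opol)"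
  unfolding anticomm_def
proof (intro conjI allI impI)
  fix a y :: nat assume "a \<noteq> y"
  then have "a + i \<noteq> y + i" by simp
  then show "omult (ovar (a + i)) (ovar (y + i)) = oneg (omult (ovar (y + i)) (ovar (a + i)) :: 'k opol)"
    by (rule var_anti)
qed simp

lemma anticomm_ovar: "anticomm (ovar :: nat \<Rightarrow> 'k::comm_ring_1 opol)"
  unfolding anticomm_def
proof (intro conjI allI impI)
  fix a y :: nat assume "a \<noteq> y"
  then show "omult (ovar a) (ovar y) = oneg (omult (ovar y) (ovar a) :: 'k opol)"
    by (rule var_anti)
qed simp

lemma gword_shift: "gword (\<lambda>l. ovar (l + i)) w = word_eval (map (\<lambda>l. l + i) w)"
  by (induction w) simp_all

lemma osigma_word: "osigma i (word_eval w) = (word_eval (map (\<lambda>l. l + i) w) :: 'k::comm_ring_1 opol)"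
  by (simp add: osigma_def osubst_word[OF anticomm_shift] gword_shift)


definition dl :: "nat \<Rightarrow> nat \<Rightarrow> 'k::comm_ring_1" where
  "dl j i = (if i = j then 1 else if i = j + 1 then -1 else 0)"

lemma dem_Nil[simp]: "dem_word j [] = ozero" by simp
lemma dem_Cons: "dem_word j (i # w) = oadd (osmul (dl j i) (word_eval w)) (omult (simg j i) (dem_word j w))"
  by (simp add: dl_def)

lemma ok_simg[simp]: "ok (simg j i :: 'k::comm_ring_1 opol)" by (simp add: simg_sw)
lemma fs_simg[simp]: "fs (simg j i :: 'k::comm_ring_1 opol)" by (simp add: ok_fs)

lemma ok_dem[simp]: "ok (dem_word j w :: 'k::comm_ring_1 opol)"
  by (induction w) (simp_all add: dem_Cons)

lemma oadd_zero_left[simp]: "oadd ozero p = (p :: 'k::comm_ring_1 opol)" by (simp add: oadd_def ozero_def)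
lemma oadd_zero_right[simp]: "oadd p ozero = (p :: 'k::comm_ring_1 opol)" by (simp add: oadd_def ozero_def)

lemma var_id:
  assumes "i \<noteq> y"
  shows "oadd (oadd (osmul (dl j i) (ovar y)) (osmul (dl j y) (simg j i)))
              (oadd (osmul (dl j y) (ovar i)) (osmul (dl j i) (simg j y))) = (ozero :: 'k::comm_ring_1 opol)"
  using assms
  by (auto simp: dl_def simg_def fun_eq_iff oadd_def osmul_def oneg_def ozero_def)

lemma ok_anti_simg:
  assumes "i \<noteq> y" "ok D"
  shows "omult (simg j i) (omult (simg j y) D) = oneg (omult (simg j y) (omult (simg j i) D) :: 'k::comm_ring_1 opol)"
proof -
  have X: "\<forall>i y. i \<noteq> y \<longrightarrow> omult (simg j i) (simg j y) = oneg (omult (simg j y) (simg j i) :: 'k opol)"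
    using anticomm_simg[where 'k='k, of j] unfolding anticomm_def by (rule conjunct2)
  have ac: "omult (simg j i) (simg j y) = oneg (omult (simg j y) (simg j i) :: 'k opol)" using X assms(1) by blast
  have "omult (simg j i) (omult (simg j y) D) = omult (omult (simg j i) (simg j y)) D"
    by (rule assoc[symmetric]) (simp_all add: assms)
  also have "\<dots> = oneg (omult (omult (simg j y) (simg j i)) D)" by (simp only: ac omult_oneg_left)
  also have "omult (omult (simg j y) (simg j i)) D = omult (simg j y) (omult (simg j i) D)"
    by (rule assoc) (simp_all add: assms)
  finally show ?thesis .
qed

lemma ring_aux:
  fixes p q A B C Dd e f :: "'a::comm_ring_1"
  assumes "p*A + q*B + (q*C + p*Dd) = 0" "e = - f"
  shows "p*A + (q*B + e) = -(q*C + (p*Dd + f))"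
proof -
  have "p*A + (q*B + e) + (q*C + (p*Dd + f)) = 0"
    using assms by (simp add: algebra_simps)
  then show ?thesis by (simp only: eq_neg_iff_add_eq_0)
qed

lemma dem_perm: "dem_word j w = osmul (wsign w) (dem_word j (sort w) :: 'k::comm_ring_1 opol)"
proof (rule perm_gen[where \<Phi>="dem_word j"])
  fix i y :: nat and w :: "nat list" assume iy: "i \<noteq> y"
  let ?E = "word_eval w :: 'k opol" and ?D = "dem_word j w :: 'k opol"
  have k3: "omult (simg j i) (omult (simg j y) ?D) = oneg (omult (simg j y) (omult (simg j i) ?D))"
    by (rule ok_anti_simg[OF iy]) simp
  have k0: "omult (oadd (oadd (osmul (dl j i) (ovar y)) (osmul (dl j y) (simg j i)))
              (oadd (osmul (dl j y) (ovar i)) (osmul (dl j i) (simg j y)))) ?E = ozero"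
    by (simp add: var_id[OF iy])
  then have "oadd (oadd (osmul (dl j i) (omult (ovar y) ?E)) (osmul (dl j y) (omult (simg j i) ?E)))
              (oadd (osmul (dl j y) (omult (ovar i) ?E)) (osmul (dl j i) (omult (simg j y) ?E))) = ozero"
    by (simp only: omult_oadd_left omult_osmul_left)
  then have k0': "\<And>x. dl j i * omult (ovar y) ?E x + dl j y * omult (simg j i) ?E x +
      (dl j y * omult (ovar i) ?E x + dl j i * omult (simg j y) ?E x) = 0"
    by (simp add: fun_eq_iff oadd_def osmul_def ozero_def)
  show "dem_word j (i # y # w) = oneg (dem_word j (y # i # w) :: 'k opol)"
  proof (rule ext)
    fix x
    have L: "dem_word j (i # y # w) x = dl j i * omult (ovar y) ?E x + (dl j y * omult (simg j i) ?E x + omult (simg j i) (omult (simg j y) ?D) x)"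
      by (simp only: dem_Cons omult_oadd_right omult_osmul_right oadd_apply osmul_apply word_eval_Cons)
    have R: "oneg (dem_word j (y # i # w)) x = - (dl j y * omult (ovar i) ?E x + (dl j i * omult (simg j y) ?E x + omult (simg j y) (omult (simg j i) ?D) x))"
      by (simp only: dem_Cons omult_oadd_right omult_osmul_right oadd_apply osmul_apply oneg_apply word_eval_Cons)
    have k3x: "omult (simg j i) (omult (simg j y) ?D) x = - omult (simg j y) (omult (simg j i) ?D) x"
      using fun_cong[OF k3, of x] by (simp only: oneg_apply)
    show "dem_word j (i # y # w) x = (oneg (dem_word j (y # i # w)) x :: 'k)"
      unfolding L R by (rule ring_aux[OF k0'[of x] k3x])
  qed
next
  fix y u u' and c :: 'k
  assume "dem_word j u = osmul c (dem_word j u')" "word_eval u = osmul c (word_eval u' :: 'k opol)"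
  then show "dem_word j (y # u) = osmul c (dem_word j (y # u'))"
    apply (simp only: dem_Cons omult_osmul_right)
    by (simp add: fun_eq_iff oadd_apply osmul_apply algebra_simps)
qed

lemma W2: "odem j (word_eval w) = (dem_word j w :: 'k::comm_ring_1 opol)"
proof -
  have "odem j (word_eval w) = osmul (wsign w) (dem_word j (mono_word (cnt w)) :: 'k opol)"
    by (simp add: odem_lext W1[of w] lext_osmul)
  also have "\<dots> = dem_word j w" using dem_perm[of j w, where 'k='k]
    by (simp add: mono_word_cnt osmul_osmul wsign_sq)
  finally show ?thesis .
qed


declare dem_word.simps(2)[simp del]

lemma dem_append:
  "dem_word j (u @ v) = oadd (omult (dem_word j u) (word_eval v)) (omult (gword (simg j) u) (dem_word j v) :: 'k::comm_ring_1 opol)"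
proof (induction u)
  case Nil then show ?case by (simp add: oone_left)
next
  case (Cons l u)
  let ?s = "simg j l :: 'k opol"
  have "dem_word j ((l # u) @ v) = oadd (osmul (dl j l) (omult (word_eval u) (word_eval v)))
      (omult ?s (oadd (omult (dem_word j u) (word_eval v)) (omult (gword (simg j) u) (dem_word j v))))"
    by (simp only: append_Cons dem_Cons eval_append Cons)
  also have "\<dots> = oadd (osmul (dl j l) (omult (word_eval u) (word_eval v)))
      (oadd (omult (omult ?s (dem_word j u)) (word_eval v)) (omult (omult ?s (gword (simg j) u)) (dem_word j v)))"
    by (simp add: omult_oadd_right assoc)
  also have "\<dots> = oadd (omult (dem_word j (l # u)) (word_eval v)) (omult (gword (simg j) (l # u)) (dem_word j v))"
    by (simp add: dem_Cons omult_oadd_left omult_osmul_left fun_eq_iff oadd_apply add.assoc)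
  finally show ?case .
qed

lemma linfs_odem: "linfs (odem j)" by (simp add: odem_lext linfs_lext)
lemma ok_odem[simp]: "ok (odem j p :: 'k::comm_ring_1 opol)" by (simp add: odem_lext)
lemma fs_odem[simp]: "fs (odem j p :: 'k::comm_ring_1 opol)" by (simp add: ok_fs)
lemma linfs_osj: "linfs (osj j)" by (simp add: osj_def linfs_osubst)
lemma ok_osj[simp]: "ok (osj j p :: 'k::comm_ring_1 opol)" by (simp add: osj_def)
lemma fs_osj[simp]: "fs (osj j p :: 'k::comm_ring_1 opol)" by (simp add: ok_fs)

lemma odem_oadd: "fs p \<Longrightarrow> fs q \<Longrightarrow> odem j (oadd p q) = oadd (odem j p) (odem j q)"
  by (simp add: odem_lext lext_oadd)
lemma odem_osmul: "fs p \<Longrightarrow> odem j (osmul c p) = osmul c (odem j p)"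
  by (simp add: odem_lext lext_osmul)
lemma odem_oneg: "fs p \<Longrightarrow> odem j (oneg p) = oneg (odem j p)"
  by (simp add: odem_lext lext_oneg)
lemma odem_osum: "finite I \<Longrightarrow> (\<And>i. i \<in> I \<Longrightarrow> fs (F i)) \<Longrightarrow> odem j (osum F I) = osum (\<lambda>i. odem j (F i)) I"
  by (simp add: odem_lext lext_osum)
lemma odem_zero[simp]: "odem j ozero = ozero" by (simp add: odem_lext)

lemma osj_mon: "osj j (mon_poly a) = gword (simg j) (mono_word a)"
  by (simp add: osj_def osubst_lext)
lemma odem_mon: "odem j (mon_poly a) = dem_word j (mono_word a)"
  by (simp add: odem_lext)

lemma leibniz:
  fixes p q :: "'k::comm_ring_1 opol"
  assumes p: "ok p" and q: "ok q"
  shows "odem j (omult p q) = oadd (omult (odem j p) q) (omult (osj j p) (odem j q))"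
proof -
  have inner: "odem j (omult (mon_poly a) q) = oadd (omult (odem j (mon_poly a)) q) (omult (osj j (mon_poly a)) (odem j q))"
    if a: "fsm a" for a
  proof (rule lin_ext[where L="\<lambda>q. odem j (omult (mon_poly a) q)"
        and L'="\<lambda>q. oadd (omult (odem j (mon_poly a)) q) (omult (osj j (mon_poly a)) (odem j q))", OF _ _ _ q])
    show "linfs (\<lambda>q. odem j (omult (mon_poly a) q) :: 'k opol)"
      by (rule linfs_comp[OF linfs_odem linfs_mult_right]) simp
    show "linfs (\<lambda>q. oadd (omult (odem j (mon_poly a)) q) (omult (osj j (mon_poly a)) (odem j q)) :: 'k opol)"
      by (rule linfs_add[OF linfs_mult_right linfs_comp[OF linfs_mult_right linfs_odem]]) simp
    fix b :: mon assume b: "fsm b"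
    have e: "omult (mon_poly a) (mon_poly b) = (word_eval (mono_word a @ mono_word b) :: 'k opol)"
      by (simp add: eval_append mono_eval a b)
    show "odem j (omult (mon_poly a) (mon_poly b)) =
        oadd (omult (odem j (mon_poly a)) (mon_poly b)) (omult (osj j (mon_poly a)) (odem j (mon_poly b)) :: 'k opol)"
      unfolding e W2 dem_append by (simp add: odem_mon osj_mon mono_eval b)
  qed
  show ?thesis
  proof (rule lin_ext[where L="\<lambda>p. odem j (omult p q)"
        and L'="\<lambda>p. oadd (omult (odem j p) q) (omult (osj j p) (odem j q))", OF _ _ _ p])
    show "linfs (\<lambda>p. odem j (omult p q) :: 'k opol)"
      by (rule linfs_comp[OF linfs_odem linfs_mult_left]) (simp add: q ok_fs)
    show "linfs (\<lambda>p. oadd (omult (odem j p) q) (omult (osj j p) (odem j q)) :: 'k opol)"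
      by (rule linfs_add[OF linfs_comp[OF linfs_mult_left linfs_odem] linfs_comp[OF linfs_mult_left linfs_osj]]) simp_all
  qed (rule inner)
qed

lemma eval_single: "word_eval [i] = (ovar i :: 'k::comm_ring_1 opol)"
  by (simp add: oone_right)

lemma odem_var: "odem j (ovar i) = osmul (dl j i) (oone :: 'k::comm_ring_1 opol)"
proof -
  have "odem j (ovar i) = (dem_word j [i] :: 'k opol)" by (subst eval_single[symmetric]) (rule W2)
  then show ?thesis by (simp add: dem_Cons)
qed

lemma osj_var: "osj j (ovar i) = (simg j i :: 'k::comm_ring_1 opol)"
proof -
  have "osj j (ovar i) = (gword (simg j) [i] :: 'k opol)"
    unfolding osj_def by (subst eval_single[symmetric]) (rule osubst_word[OF anticomm_simg])
  then show ?thesis by (simp add: oone_right)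
qed

lemma odem_var_mult:
  assumes "ok P"
  shows "odem j (omult (ovar i) P) = oadd (osmul (dl j i) P) (omult (simg j i) (odem j P) :: 'k::comm_ring_1 opol)"
  using assms by (simp add: leibniz odem_var osj_var omult_osmul_left oone_left)


definition far :: "nat \<Rightarrow> nat \<Rightarrow> bool" where "far k i \<longleftrightarrow> i + 2 \<le> k \<or> k + 2 \<le> i"

lemma far_sym: "far k i \<Longrightarrow> far i k" by (auto simp: far_def)

lemma F1: "far k i \<Longrightarrow> sg i l * dl k (sw i l) = - (dl k l :: 'k::comm_ring_1)"
  by (auto simp: far_def sg_def dl_def sw_def)

lemma simg_comm: "far k i \<Longrightarrow> osmul (sg i l) (simg k (sw i l)) = osmul (sg k l) (simg i (sw k l) :: 'k::comm_ring_1 opol)"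
  by (auto simp: far_def sg_def sw_def simg_def fun_eq_iff osmul_def oneg_def)

lemma odem_simg: "far k i \<Longrightarrow> odem k (simg i l) = osmul (- dl k l) (oone :: 'k::comm_ring_1 opol)"
  by (simp add: simg_sw odem_osmul odem_var osmul_osmul F1)

lemma osj_osmul: "fs p \<Longrightarrow> osj j (osmul c p) = osmul c (osj j p)"
  by (simp add: osj_def osubst_lext lext_osmul)

lemma osj_simg: "osj k (simg i l) = osmul (sg i l) (simg k (sw i l) :: 'k::comm_ring_1 opol)"
  by (simp add: simg_sw osj_osmul osj_var)

lemma stepA:
  assumes "far k i"
  shows "odem k (dem_word i (l # w)) = oadd (osmul (dl i l) (dem_word k w))
     (oadd (osmul (- dl k l) (dem_word i w)) (omult (osj k (simg i l)) (odem k (dem_word i w))) :: 'k::comm_ring_1 opol)"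
proof -
  have "odem k (dem_word i (l # w)) = oadd (osmul (dl i l) (odem k (word_eval w)))
          (odem k (omult (simg i l) (dem_word i w)) :: 'k opol)"
    by (simp add: dem_Cons odem_oadd odem_osmul ok_fs)
  also have "\<dots> = oadd (osmul (dl i l) (dem_word k w))
     (oadd (osmul (- dl k l) (dem_word i w)) (omult (osj k (simg i l)) (odem k (dem_word i w))))"
    by (simp add: W2 leibniz odem_simg[OF assms] omult_osmul_left oone_left)
  finally show ?thesis .
qed

lemma dem_dem_word:
  assumes "far k i"
  shows "odem k (dem_word i w) = oneg (odem i (dem_word k w) :: 'k::comm_ring_1 opol)"
proof (induction w)
  case Nil then show ?case by (simp only: dem_word.simps(1) odem_zero) (simp add: fun_eq_iff oneg_apply ozero_apply)
next
  case (Cons l w)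
  have S: "osj k (simg i l) = (osj i (simg k l) :: 'k opol)"
    by (simp add: osj_simg simg_comm[OF assms])
  have A: "odem k (dem_word i (l # w)) = oadd (osmul (dl i l) (dem_word k w))
     (oadd (osmul (- dl k l) (dem_word i w)) (omult (osj k (simg i l)) (odem k (dem_word i w))) :: 'k opol)"
    by (rule stepA[OF assms])
  have B: "odem i (dem_word k (l # w)) = oadd (osmul (dl k l) (dem_word i w))
     (oadd (osmul (- dl i l) (dem_word k w)) (omult (osj i (simg k l)) (odem i (dem_word k w))) :: 'k opol)"
    by (rule stepA[OF far_sym[OF assms]])
  show ?case unfolding A B S Cons omult_oneg_right
    by (simp add: fun_eq_iff oadd_apply osmul_apply oneg_apply algebra_simps)
qed

lemma linfs_oneg: "linfs (\<lambda>p. oneg (p :: 'k::comm_ring_1 opol))"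
  by (rule linfsI) (simp_all add: fun_eq_iff oneg_apply osum_apply osmul_apply sum_negf)

lemma dem_dem:
  assumes "far k i" "ok p"
  shows "odem k (odem i p) = oneg (odem i (odem k p) :: 'k::comm_ring_1 opol)"
proof (rule lin_ext[where L="\<lambda>p. odem k (odem i p)" and L'="\<lambda>p. oneg (odem i (odem k p))", OF _ _ _ assms(2)])
  show "linfs (\<lambda>p. odem k (odem i p) :: 'k opol)"
    by (rule linfs_comp[OF linfs_odem linfs_odem]) simp
  show "linfs (\<lambda>p. oneg (odem i (odem k p)) :: 'k opol)"
    by (rule linfs_comp[OF linfs_oneg linfs_comp[OF linfs_odem linfs_odem]]) simp_all
  fix a :: mon assume a: "fsm a"
  show "odem k (odem i (mon_poly a)) = (oneg (odem i (odem k (mon_poly a))) :: 'k opol)"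
    by (simp add: odem_mon dem_dem_word[OF assms(1)])
qed


lemma linfs_osigma: "linfs (osigma i)" by (simp add: osigma_def linfs_osubst)
lemma ok_osigma[simp]: "ok (osigma i p :: 'k::comm_ring_1 opol)" by (simp add: osigma_def)
lemma fs_osigma[simp]: "fs (osigma i p :: 'k::comm_ring_1 opol)" by (simp add: ok_fs)
lemma osigma_oadd: "fs p \<Longrightarrow> fs q \<Longrightarrow> osigma i (oadd p q) = oadd (osigma i p) (osigma i q)"
  by (simp add: osigma_def osubst_lext lext_oadd)
lemma osigma_osmul: "fs p \<Longrightarrow> osigma i (osmul c p) = osmul c (osigma i p)"
  by (simp add: osigma_def osubst_lext lext_osmul)

lemma osigma_var_mult: "ok P \<Longrightarrow> osigma i (omult (ovar l) P) = omult (ovar (l + i)) (osigma i (P :: 'k::comm_ring_1 opol))"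
  unfolding osigma_def by (rule osubst_var_mult[OF anticomm_shift])

lemma osigma_dem_word: "osigma i (dem_word j w) = (dem_word (j + i) (map (\<lambda>l. l + i) w) :: 'k::comm_ring_1 opol)"
proof (induction w)
  case Nil then show ?case by (simp add: osigma_def osubst_lext)
next
  case (Cons l w)
  have d: "dl (j + i) (l + i) = (dl j l :: 'k)" by (simp add: dl_def)
  have g: "sg (j + i) (l + i) = (sg j l :: 'k)" by (simp add: sg_def)
  have s: "sw (j + i) (l + i) = sw j l + i" by (simp add: sw_def)
  have "osigma i (dem_word j (l # w)) = oadd (osmul (dl j l) (osigma i (word_eval w)))
     (osmul (sg j l) (omult (ovar (sw j l + i)) (osigma i (dem_word j w) :: 'k opol)))"
    by (simp add: dem_Cons osigma_oadd osigma_osmul ok_fs simg_sw omult_osmul_left osigma_var_mult)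
  also have "\<dots> = dem_word (j + i) (map (\<lambda>l. l + i) (l # w))"
    by (simp add: dem_Cons Cons osigma_word d g s simg_sw omult_osmul_left)
  finally show ?case .
qed

lemma sigma_dem:
  assumes "ok p"
  shows "odem (j + i) (osigma i p) = osigma i (odem j p :: 'k::comm_ring_1 opol)"
proof (rule lin_ext[where L="\<lambda>p. odem (j + i) (osigma i p)" and L'="\<lambda>p. osigma i (odem j p)", OF _ _ _ assms])
  show "linfs (\<lambda>p. odem (j + i) (osigma i p) :: 'k opol)"
    by (rule linfs_comp[OF linfs_odem linfs_osigma]) simp
  show "linfs (\<lambda>p. osigma i (odem j p) :: 'k opol)"
    by (rule linfs_comp[OF linfs_osigma linfs_odem]) simp
  fix a :: mon assume a: "fsm a"
  have "osigma i (mon_poly a) = (word_eval (map (\<lambda>l. l + i) (mono_word a)) :: 'k opol)"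
    by (simp add: mono_eval[OF a, symmetric] osigma_word)
  then show "odem (j + i) (osigma i (mon_poly a)) = (osigma i (odem j (mon_poly a)) :: 'k opol)"
    by (simp add: W2 odem_mon osigma_dem_word)
qed

definition vlt :: "nat \<Rightarrow> 'k::zero opol \<Rightarrow> bool" where
  "vlt j p \<longleftrightarrow> (\<forall>a. p a \<noteq> 0 \<longrightarrow> (\<forall>i. a i \<noteq> 0 \<longrightarrow> i < j))"

lemma set_mono_word: "x \<in> set (mono_word a) \<Longrightarrow> a x \<noteq> 0"
  unfolding mono_word_def
  by (cases "finite {i. a i \<noteq> 0}") auto

lemma dem_small: "(\<And>x. x \<in> set w \<Longrightarrow> x < j) \<Longrightarrow> dem_word j w = (ozero :: 'k::comm_ring_1 opol)"
proof (induction w)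
  case Nil then show ?case by simp
next
  case (Cons l w)
  have "l < j" using Cons.prems by simp
  then have "dl j l = (0::'k)" by (simp add: dl_def)
  moreover have "dem_word j w = (ozero :: 'k opol)" using Cons by simp
  ultimately show ?case by (simp add: dem_Cons) (simp add: fun_eq_iff oadd_apply osmul_apply ozero_apply)
qed

lemma odem_vlt:
  assumes "vlt j p"
  shows "odem j p = (ozero :: 'k::comm_ring_1 opol)"
proof -
  have "\<And>a. p a \<noteq> 0 \<Longrightarrow> dem_word j (mono_word a) = (ozero :: 'k opol)"
    using assms unfolding vlt_def by (auto intro!: dem_small dest: set_mono_word)
  then show ?thesis
    by (simp add: odem_def osum_def osmul_def ozero_def fun_eq_iff)
qed

lemma cnt_set: "0 < cnt w i \<Longrightarrow> i \<in> set w"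
  unfolding cnt_def using count_list_0_iff[of w i] by (metis less_irrefl)
lemma vlt_word: "(\<And>x. x \<in> set w \<Longrightarrow> x < j) \<Longrightarrow> vlt j (word_eval w :: 'k::comm_ring_1 opol)"
  unfolding vlt_def W1 by (auto simp: osmul_def mon_poly_def dest!: cnt_set)

lemma vlt_osum: "(\<And>i. i \<in> I \<Longrightarrow> vlt j (F i)) \<Longrightarrow> vlt j (osum F I :: 'k::comm_ring_1 opol)"
  unfolding vlt_def by (auto elim!: osum_nz)

lemma vlt_oadd: "vlt j p \<Longrightarrow> vlt j q \<Longrightarrow> vlt j (oadd p q :: 'k::comm_ring_1 opol)"
  unfolding vlt_def oadd_def by (metis add.left_neutral add.right_neutral)

lemma vlt_omult: assumes "vlt j p" "vlt j q" shows "vlt j (omult p q :: 'k::comm_ring_1 opol)"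
  unfolding vlt_def
proof (intro allI impI)
  fix c i assume nz: "omult p q c \<noteq> 0" and ci: "c i \<noteq> 0"
  obtain a where a: "\<forall>i. a i \<le> c i" "p a \<noteq> 0" "q (\<lambda>i. c i - a i) \<noteq> 0"
    using nz by (auto elim: omult_nz)
  show "i < j"
  proof (cases "a i = 0")
    case True
    then have "(\<lambda>i. c i - a i) i \<noteq> 0" using ci by simp
    then show ?thesis using a(3) assms(2) unfolding vlt_def by blast
  next
    case False then show ?thesis using a(2) assms(1) unfolding vlt_def by blast
  qed
qed

lemma vlt_mono: "vlt j p \<Longrightarrow> j \<le> k \<Longrightarrow> vlt k p"
  unfolding vlt_def by (meson less_le_trans)


definition HL :: "nat \<Rightarrow> nat \<Rightarrow> nat list set" where
  "HL N r = {l. length l = r \<and> sorted l \<and> set l \<subseteq> {1..N}}"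

lemma hsym_HL: "hsym N r = osum (\<lambda>l. word_eval (rev l)) (HL N r)"
  by (simp add: hsym_def HL_def)

lemma finite_HL: "finite (HL N r)"
  unfolding HL_def
  by (rule finite_subset[OF _ finite_lists_length_eq[OF finite_atLeastAtMost, of 1 N r]]) auto

lemma osum_union: "finite A \<Longrightarrow> finite B \<Longrightarrow> A \<inter> B = {} \<Longrightarrow> osum F (A \<union> B) = oadd (osum F A) (osum F B)"
  by (simp add: osum_def oadd_def sum.union_disjoint)
lemma osum_image: "inj_on f A \<Longrightarrow> osum F (f ` A) = osum (\<lambda>x. F (f x)) A"
  by (simp add: osum_def sum.reindex)
lemma osum_single: "osum F {x} = F x" by (simp add: osum_def)
lemma osum_empty: "osum F {} = ozero" by (simp add: osum_def ozero_def)

lemma ok_hsym[simp]: "ok (hsym N r :: 'k::comm_ring_1 opol)"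
  by (simp add: hsym_HL finite_HL)

lemma hsym_0: "hsym N 0 = (oone :: 'k::comm_ring_1 opol)"
proof -
  have "HL N 0 = {[]}" by (auto simp: HL_def)
  then show ?thesis by (simp add: hsym_HL osum_single)
qed

lemma hsym_zero_N: "hsym 0 (Suc r) = (ozero :: 'k::comm_ring_1 opol)"
proof -
  have "HL 0 (Suc r) = {}" by (auto simp: HL_def)
  then show ?thesis by (simp add: hsym_HL osum_empty)
qed

lemma HL_split:
  "HL (Suc N) (Suc r) = (\<lambda>l. l @ [Suc N]) ` HL (Suc N) r \<union> HL N (Suc r)"
proof (intro equalityI subsetI)
  fix l assume l: "l \<in> HL (Suc N) (Suc r)"
  show "l \<in> (\<lambda>l. l @ [Suc N]) ` HL (Suc N) r \<union> HL N (Suc r)"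
  proof (cases "Suc N \<in> set l")
    case True
    have ne: "l \<noteq> []" using l by (auto simp: HL_def)
    then have e: "l = butlast l @ [last l]" by simp
    have sl: "sorted l" and sub: "set l \<subseteq> {1..Suc N}" and len: "length l = Suc r" using l by (auto simp: HL_def)
    have "sorted (butlast l @ [last l])" using sl e by simp
    then have le: "\<forall>x\<in>set (butlast l). x \<le> last l" by (simp add: sorted_append)
    have "last l \<in> set l" using ne by simp
    then have "last l \<le> Suc N" using sub by auto
    moreover have "Suc N \<le> last l"
    proof -
      have "Suc N \<in> set (butlast l @ [last l])" using True e by simp
      then show ?thesis using le by auto
    qed
    ultimately have ll: "last l = Suc N" by simp
    have "butlast l \<in> HL (Suc N) r"
      unfolding HL_def using sl sub len e
      by (auto simp: sorted_butlast in_set_butlastD)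
    then show ?thesis using e ll by (metis UnI1 image_eqI)
  next
    case False
    have "set l \<subseteq> {1..N}"
    proof
      fix x assume x: "x \<in> set l"
      then have "x \<in> {1..Suc N}" using l by (auto simp: HL_def)
      moreover have "x \<noteq> Suc N" using x False by auto
      ultimately show "x \<in> {1..N}" by auto
    qed
    then have "l \<in> HL N (Suc r)" using l by (auto simp: HL_def)
    then show ?thesis by simp
  qed
next
  fix l assume "l \<in> (\<lambda>l. l @ [Suc N]) ` HL (Suc N) r \<union> HL N (Suc r)"
  then show "l \<in> HL (Suc N) (Suc r)"
    by (fastforce simp: HL_def sorted_append)
qed

lemma hsym_rec:
  "hsym (Suc N) (Suc r) = oadd (omult (ovar (Suc N)) (hsym (Suc N) r)) (hsym N (Suc r) :: 'k::comm_ring_1 opol)"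
proof -
  have inj: "inj_on (\<lambda>l. l @ [Suc N]) (HL (Suc N) r)" by (rule inj_onI) simp
  have disj: "(\<lambda>l. l @ [Suc N]) ` HL (Suc N) r \<inter> HL N (Suc r) = {}"
    by (auto simp: HL_def)
  have "hsym (Suc N) (Suc r) = oadd (osum (\<lambda>l. word_eval (rev (l @ [Suc N]))) (HL (Suc N) r))
      (hsym N (Suc r) :: 'k opol)"
    unfolding hsym_HL[of "Suc N" "Suc r"] HL_split
    by (subst osum_union) (simp_all add: finite_HL disj osum_image[OF inj] hsym_HL)
  also have "osum (\<lambda>l. word_eval (rev (l @ [Suc N]))) (HL (Suc N) r) = omult (ovar (Suc N)) (hsym (Suc N) r :: 'k opol)"
    by (simp add: hsym_HL omult_osum_right)
  finally show ?thesis .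
qed

lemma vlt_hsym: "vlt (Suc N) (hsym N r :: 'k::comm_ring_1 opol)"
  unfolding hsym_HL
  by (rule vlt_osum, rule vlt_word) (auto simp: HL_def)

lemma odem_oone[simp]: "odem j oone = (ozero :: 'k::comm_ring_1 opol)"
  using W2[of j "[]", where 'k='k] by simp

lemma simg_self: "simg j j = ovar (Suc j)" by (simp add: simg_def)

lemma oadd_comm: "oadd p q = oadd q (p :: 'k::comm_ring_1 opol)"
  by (simp add: oadd_def add.commute)

lemma osmul_one[simp]: "osmul 1 p = (p :: 'k::comm_ring_1 opol)" by (simp add: osmul_def)

lemma HD: "odem (Suc M) (hsym (Suc M) (Suc r)) = (hsym (Suc (Suc M)) r :: 'k::comm_ring_1 opol)"
proof (induction r)
  case 0
  have "odem (Suc M) (hsym (Suc M) (Suc 0)) = oadd (odem (Suc M) (omult (ovar (Suc M)) (hsym (Suc M) 0)))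
      (odem (Suc M) (hsym M (Suc 0)) :: 'k opol)"
    by (simp add: hsym_rec odem_oadd ok_fs)
  also have "\<dots> = oone" by (simp add: odem_vlt[OF vlt_hsym] odem_var_mult hsym_0 dl_def)
  finally show ?case by (simp add: hsym_0)
next
  case (Suc r)
  have "odem (Suc M) (hsym (Suc M) (Suc (Suc r))) = oadd (odem (Suc M) (omult (ovar (Suc M)) (hsym (Suc M) (Suc r))))
      (odem (Suc M) (hsym M (Suc (Suc r))) :: 'k opol)"
    by (simp add: hsym_rec[of M "Suc r", where 'k='k] odem_oadd ok_fs)
  also have "\<dots> = oadd (hsym (Suc M) (Suc r)) (omult (ovar (Suc (Suc M))) (hsym (Suc (Suc M)) r))"
    by (simp add: odem_vlt[OF vlt_hsym] odem_var_mult Suc dl_def simg_self)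
  also have "\<dots> = hsym (Suc (Suc M)) (Suc r)"
    by (simp add: hsym_rec[of "Suc M" r, where 'k='k] oadd_comm)
  finally show ?case .
qed

lemma hsym_one: "hsym 1 r = (word_eval (replicate r 1) :: 'k::comm_ring_1 opol)"
proof (induction r)
  case 0 then show ?case by (simp add: hsym_0)
next
  case (Suc r)
  have "hsym (Suc 0) (Suc r) = oadd (omult (ovar (Suc 0)) (hsym (Suc 0) r)) (hsym 0 (Suc r) :: 'k opol)"
    by (rule hsym_rec)
  then show ?case using Suc by (simp add: hsym_zero_N)
qed

lemma opow_word: "opow (ovar 1) r = (word_eval (replicate r 1) :: 'k::comm_ring_1 opol)"
  by (induction r) (simp_all add: opow_def)


definition EL :: "nat \<Rightarrow> nat \<Rightarrow> nat set set" where
  "EL N r = {S. S \<subseteq> {1..N} \<and> card S = r}"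

lemma esym_EL: "esym N r = osum (\<lambda>S. word_eval (sorted_list_of_set S)) (EL N r)"
  by (simp add: esym_def EL_def)

lemma finite_EL: "finite (EL N r)"
  unfolding EL_def by (rule finite_subset[of _ "Pow {1..N}"]) auto

lemma ok_esym[simp]: "ok (esym N r :: 'k::comm_ring_1 opol)"
  by (simp add: esym_EL finite_EL)
lemma fs_esym[simp]: "fs (esym N r :: 'k::comm_ring_1 opol)"
  by (simp add: ok_fs)

lemma esym_0: "esym N 0 = (oone :: 'k::comm_ring_1 opol)"
proof -
  have "EL N 0 = {{}}"
  proof (intro equalityI subsetI)
    fix S assume "S \<in> EL N 0"
    then have "S \<subseteq> {1..N}" "card S = 0" by (auto simp: EL_def)
    moreover then have "finite S" using finite_subset by blast
    ultimately show "S \<in> {{}}" by simp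
  qed (simp add: EL_def)
  then show ?thesis by (simp add: esym_EL osum_single)
qed

lemma EL_split: "EL (Suc N) (Suc r) = EL N (Suc r) \<union> insert (Suc N) ` EL N r"
proof (intro equalityI subsetI)
  fix S assume S: "S \<in> EL (Suc N) (Suc r)"
  then have sub: "S \<subseteq> {1..Suc N}" and c: "card S = Suc r" by (auto simp: EL_def)
  have fin: "finite S" using sub finite_subset by blast
  show "S \<in> EL N (Suc r) \<union> insert (Suc N) ` EL N r"
  proof (cases "Suc N \<in> S")
    case True
    have "S - {Suc N} \<subseteq> {1..N}" using sub by auto
    moreover have "card (S - {Suc N}) = r" using c True fin by simp
    ultimately have "S - {Suc N} \<in> EL N r" by (simp add: EL_def)
    moreover have "S = insert (Suc N) (S - {Suc N})" using True by auto
    ultimately show ?thesis by blast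
  next
    case False
    then have "S \<subseteq> {1..N}" using sub by (auto simp: le_Suc_eq)
    then show ?thesis using c by (simp add: EL_def)
  qed
next
  fix S assume "S \<in> EL N (Suc r) \<union> insert (Suc N) ` EL N r"
  then show "S \<in> EL (Suc N) (Suc r)"
  proof
    assume "S \<in> EL N (Suc r)" then show ?thesis by (auto simp: EL_def)
  next
    assume "S \<in> insert (Suc N) ` EL N r"
    then obtain T where T: "T \<in> EL N r" "S = insert (Suc N) T" by blast
    have fin: "finite T" using T(1) finite_subset[of T "{1..N}"] by (auto simp: EL_def)
    have "Suc N \<notin> T" using T(1) by (auto simp: EL_def)
    then show ?thesis using T fin by (auto simp: EL_def)
  qed
qed

lemma sorted_insert_max:
  assumes "S \<subseteq> {1..N}"
  shows "sorted_list_of_set (insert (Suc N) S) = sorted_list_of_set S @ [Suc N]"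
proof -
  have fin: "finite S" using assms finite_subset by blast
  have nin: "Suc N \<notin> S" using assms by auto
  have H: "sorted_wrt (<) (sorted_list_of_set S @ [Suc N]) \<and> set (sorted_list_of_set S @ [Suc N]) = insert (Suc N) S
        \<and> length (sorted_list_of_set S @ [Suc N]) = card (insert (Suc N) S)"
    using fin nin assms by (auto simp: sorted_wrt_append)
  have fi: "finite (insert (Suc N) S)" using fin by simp
  show ?thesis using sorted_list_of_set_unique[OF fi, of "sorted_list_of_set S @ [Suc N]"] H by blast
qed

lemma esym_rec:
  "esym (Suc N) (Suc r) = oadd (esym N (Suc r)) (omult (esym N r) (ovar (Suc N)) :: 'k::comm_ring_1 opol)"
proof -
  have inj: "inj_on (insert (Suc N)) (EL N r)"
  proof (rule inj_onI)
    fix S T assume "S \<in> EL N r" "T \<in> EL N r" "insert (Suc N) S = insert (Suc N) T"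
    moreover then have "Suc N \<notin> S" "Suc N \<notin> T" by (auto simp: EL_def)
    ultimately show "S = T" by (metis Diff_insert_absorb)
  qed
  have disj: "EL N (Suc r) \<inter> insert (Suc N) ` EL N r = {}" by (auto simp: EL_def)
  have "esym (Suc N) (Suc r) = oadd (esym N (Suc r))
      (osum (\<lambda>S. word_eval (sorted_list_of_set (insert (Suc N) S))) (EL N r) :: 'k opol)"
    unfolding esym_EL[of "Suc N" "Suc r"] EL_split
    by (subst osum_union) (simp_all add: finite_EL disj osum_image[OF inj] esym_EL)
  also have "osum (\<lambda>S. word_eval (sorted_list_of_set (insert (Suc N) S))) (EL N r)
      = osum (\<lambda>S. omult (word_eval (sorted_list_of_set S)) (ovar (Suc N))) (EL N r :: nat set set)"
    unfolding osum_def
    by (intro ext sum.cong refl) (simp add: EL_def sorted_insert_max eval_append oone_right)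
  also have "\<dots> = omult (esym N r) (ovar (Suc N) :: 'k opol)"
    by (simp add: esym_EL omult_osum_left)
  finally show ?thesis .
qed

lemma vlt_esym: "vlt (Suc N) (esym N r :: 'k::comm_ring_1 opol)"
  unfolding esym_EL
proof (rule vlt_osum, rule vlt_word)
  fix S x assume "S \<in> EL N r" "x \<in> set (sorted_list_of_set S)"
  moreover then have "finite S" using finite_subset[of S "{1..N}"] by (auto simp: EL_def)
  ultimately show "x < Suc N" by (auto simp: EL_def)
qed

lemma kill_mult:
  assumes "odem j A = ozero" "ok A" "ok P"
  shows "odem j (omult A P) = omult (osj j A) (odem j P :: 'k::comm_ring_1 opol)"
  using assms by (simp add: leibniz)

lemma esym_kill: "1 \<le> j \<Longrightarrow> j < N \<Longrightarrow> odem j (esym N r) = (ozero :: 'k::comm_ring_1 opol)"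
proof (induction N arbitrary: r j)
  case 0 then show ?case by simp
next
  case (Suc M)
  show ?case
  proof (cases r)
    case 0 then show ?thesis by (simp add: esym_0)
  next
    case (Suc r')
    show ?thesis
    proof (cases "j < M")
      case True
      have k1: "odem j (esym M (Suc r')) = (ozero :: 'k opol)" by (rule Suc.IH[OF Suc.prems(1) True])
      have k2: "odem j (esym M r') = (ozero :: 'k opol)" by (rule Suc.IH[OF Suc.prems(1) True])
      have dv: "dl j (Suc M) = (0::'k)" using True by (simp add: dl_def)
      show ?thesis unfolding \<open>r = Suc r'\<close> esym_rec
        by (simp add: odem_oadd kill_mult[OF k2] k1 odem_var dv)
           (simp add: osmul_def fun_eq_iff ozero_def oone_def omult_def)
    next
      case False
      then have jM: "j = M" using Suc.prems by simp
      then obtain M' where M': "M = Suc M'" using Suc.prems by (cases M) auto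
      let ?J = "Suc M'"
      have kE: "\<And>s. odem ?J (esym M' s) = (ozero :: 'k opol)" by (rule odem_vlt[OF vlt_esym])
      have d1: "odem ?J (ovar ?J) = osmul 1 (oone :: 'k opol)" by (simp add: odem_var dl_def)
      have d2: "odem ?J (ovar (Suc ?J)) = osmul (-1) (oone :: 'k opol)" by (simp add: odem_var dl_def)
      have dxx: "odem ?J (omult (ovar ?J) (ovar (Suc ?J))) = (ozero :: 'k opol)"
        by (simp add: odem_var_mult dl_def simg_self d2 omult_osmul_right oone_right)
           (simp add: fun_eq_iff oadd_apply osmul_apply ozero_apply)
      have kA: "\<And>A. odem ?J A = ozero \<Longrightarrow> ok A \<Longrightarrow> odem ?J (omult A (ovar ?J)) = osj ?J (A :: 'k opol)"
        by (simp add: kill_mult d1 oone_right)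
      have kB: "\<And>A. odem ?J A = ozero \<Longrightarrow> ok A \<Longrightarrow> odem ?J (omult A (ovar (Suc ?J))) = oneg (osj ?J (A :: 'k opol))"
        by (simp add: kill_mult d2 oone_right omult_osmul_right oneg_osmul)
      have kC: "\<And>C. odem ?J C = ozero \<Longrightarrow> ok C \<Longrightarrow> odem ?J (omult (omult C (ovar ?J)) (ovar (Suc ?J))) = (ozero :: 'k opol)"
        by (simp add: assoc kill_mult dxx)
      show ?thesis
      proof (cases r')
        case 0
        have "esym (Suc M) r = oadd (oadd (esym M' (Suc 0)) (omult (esym M' 0) (ovar ?J))) (omult oone (ovar (Suc ?J)) :: 'k opol)"
          unfolding \<open>r = Suc r'\<close> 0 M' esym_rec[of "Suc M'"] esym_rec[of M' 0] esym_0 by simp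
        then show ?thesis unfolding jM M'
          by (simp add: odem_oadd esym_0 oone_left odem_var dl_def kE)
             (simp add: fun_eq_iff oadd_apply osmul_apply ozero_apply)
      next
        case (Suc r'')
        have "esym (Suc M) r = oadd (oadd (esym M' (Suc (Suc r''))) (omult (esym M' (Suc r'')) (ovar ?J)))
            (omult (oadd (esym M' (Suc r'')) (omult (esym M' r'') (ovar ?J))) (ovar (Suc ?J)) :: 'k opol)"
          unfolding \<open>r = Suc r'\<close> Suc M' esym_rec[of "Suc M'"] esym_rec[of M'] by simp
        then show ?thesis unfolding jM M'
          by (simp add: odem_oadd omult_oadd_left kE kA kB kC)
             (simp add: fun_eq_iff oadd_apply oneg_apply ozero_apply)
      qed
    qed
  qed
qed

lemma osym_ok: "p \<in> osym N \<Longrightarrow> ok (p :: 'k::comm_ring_1 opol)"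
  by (induction rule: osym.induct) simp_all

lemma osym_kill: "p \<in> osym N \<Longrightarrow> 1 \<le> j \<Longrightarrow> j < N \<Longrightarrow> odem j p = (ozero :: 'k::comm_ring_1 opol)"
proof (induction rule: osym.induct)
  case (gen r) then show ?case by (rule esym_kill)
next
  case one then show ?case by simp
next
  case (add p q) then show ?case by (simp add: odem_oadd ok_fs osym_ok)
next
  case (smul p c) then show ?case by (simp add: odem_osmul ok_fs osym_ok) (simp add: osmul_def ozero_def)
next
  case (mult p q) then show ?case by (simp add: leibniz osym_ok)
qed


lemma ok_odem_seq[simp]: "ok g \<Longrightarrow> ok (odem_seq i g :: 'k::comm_ring_1 opol)"
  by (induction i) simp_all

lemma osigma_zero[simp]: "osigma i ozero = ozero"
  by (simp add: osigma_def osubst_lext)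

lemma oneg_zero[simp]: "oneg ozero = (ozero :: 'k::comm_ring_1 opol)"
  by (simp add: oneg_def ozero_def)

lemma hsym_one': "hsym (Suc 0) r = (word_eval (replicate r (Suc 0)) :: 'k::comm_ring_1 opol)"
  using hsym_one[of r, where 'k='k] by simp
lemma opow_word': "opow (ovar (Suc 0)) r = (word_eval (replicate r (Suc 0)) :: 'k::comm_ring_1 opol)"
  using opow_word[of r, where 'k='k] by simp

lemma osum_cong: "(\<And>i. i \<in> I \<Longrightarrow> F i = G i) \<Longrightarrow> osum F I = osum G I"
  unfolding osum_def by (intro ext sum.cong refl) simp

lemma dem_seq_kill:
  assumes "ok g" "odem K g = ozero"
  shows "i + 2 \<le> K \<Longrightarrow> odem K (odem_seq i g) = (ozero :: 'k::comm_ring_1 opol)"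
proof (induction i)
  case 0 then show ?case using assms by simp
next
  case (Suc i)
  have far: "far K (Suc i)" using Suc.prems by (simp add: far_def)
  have "odem K (odem_seq (Suc i) g) = oneg (odem (Suc i) (odem K (odem_seq i g)))"
    by (simp add: dem_dem[OF far] assms)
  also have "\<dots> = ozero"
  proof -
    have h: "odem K (odem_seq i g) = (ozero :: 'k opol)" using Suc by simp
    show ?thesis by (simp only: h odem_zero oneg_zero)
  qed
  finally show ?case .
qed

lemma HH:
  assumes "i < K"
  shows "odem K (osigma i (hsym (K - i) (Suc r))) = osigma i (hsym (Suc K - i) r :: 'k::comm_ring_1 opol)"
proof -
  obtain M where M: "K - i = Suc M" using assms by (cases "K - i") auto
  have K: "K = Suc M + i" using M assms by simp
  have "odem (Suc M + i) (osigma i (hsym (Suc M) (Suc r))) = osigma i (odem (Suc M) (hsym (Suc M) (Suc r)) :: 'k opol)"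
    by (rule sigma_dem) simp
  then have "odem K (osigma i (hsym (K - i) (Suc r))) = osigma i (odem (Suc M) (hsym (Suc M) (Suc r)) :: 'k opol)"
    using M K by simp
  also have "\<dots> = osigma i (hsym (Suc (Suc M)) r)" by (simp only: HD)
  also have "Suc (Suc M) = Suc K - i" using M assms by simp
  finally show ?thesis .
qed

lemma gword_simg_rep: "gword (simg K) (replicate r K) = (word_eval (replicate r (Suc K)) :: 'k::comm_ring_1 opol)"
  by (induction r) (simp_all add: simg_self)

lemma SS:
  assumes "1 \<le> K"
  shows "osj K (osigma (K - 1) (hsym 1 r)) = osigma K (hsym 1 r :: 'k::comm_ring_1 opol)"
proof -
  have m1: "map (\<lambda>l. l + (K - 1)) (replicate r (1::nat)) = replicate r K" using assms by simp
  have m2: "map (\<lambda>l. l + K) (replicate r (1::nat)) = replicate r (Suc K)" by simp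
  have k1: "Suc (K - Suc 0) = K" using assms by simp
  show ?thesis
    by (simp add: hsym_one' osigma_word m1 m2 k1 osj_def osubst_word[OF anticomm_simg] gword_simg_rep)
qed

lemma osigma_0: "ok p \<Longrightarrow> osigma 0 p = (p :: 'k::comm_ring_1 opol)"
  by (simp add: osigma_def osubst_id)

lemma main_aux:
  fixes f :: "'k::comm_ring_1 opol"
  assumes f: "f \<in> osym (n - 1)"
  shows "k' < n \<Longrightarrow> odem_seq k' (omult (opow (ovar 1) (m + k')) (osigma 1 f)) =
    osum (\<lambda>i. omult (osigma i (hsym (Suc k' - i) (m + i))) (odem_seq i (osigma 1 f))) {0..<Suc k'}"
proof (induction k' arbitrary: m)
  case 0
  have okg: "ok (osigma 1 f)" by simp
  show ?case
    by (simp add: osum_single opow_word' hsym_one' osigma_0)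
next
  case (Suc k)
  let ?g = "osigma 1 f"
  let ?D = "\<lambda>i. odem_seq i ?g"
  let ?K = "Suc k"
  have okg: "ok ?g" by simp
  have okf: "ok f" using f by (rule osym_ok)
  have IH: "odem_seq k (omult (opow (ovar 1) (Suc m + k)) ?g) =
    osum (\<lambda>i. omult (osigma i (hsym (?K - i) (Suc m + i))) (?D i)) {0..<?K}"
    using Suc.IH[of "Suc m"] Suc.prems by simp
  define G where "G i = omult (osigma i (hsym (Suc ?K - i) (m + i))) (?D i)" for i
  define T where "T i = omult (osj ?K (osigma i (hsym (?K - i) (Suc m + i)))) (odem ?K (?D i))" for i
  have step: "odem ?K (omult (osigma i (hsym (?K - i) (Suc m + i))) (?D i)) = oadd (G i) (T i)"
    if "i < ?K" for i
    using that by (simp add: leibniz okg G_def T_def HH)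
  have Tz: "T i = ozero" if "i < k" for i
  proof -
    have kg: "odem ?K ?g = ozero"
    proof -
      have "odem (k + 1) (osigma 1 f) = osigma 1 (odem k f)" by (rule sigma_dem[OF okf])
      moreover have "odem k f = ozero"
        by (rule osym_kill[OF f]) (use that Suc.prems in auto)
      ultimately show ?thesis by simp
    qed
    have "odem ?K (?D i) = ozero" by (rule dem_seq_kill[OF okg kg]) (use that in simp)
    then show ?thesis by (simp add: T_def)
  qed
  have Tk: "T k = G ?K"
  proof -
    have "osj ?K (osigma k (hsym 1 (Suc m + k))) = (osigma ?K (hsym 1 (Suc m + k)) :: 'k opol)"
      using SS[of ?K "Suc m + k", where 'k='k] by simp
    then show ?thesis by (simp add: T_def G_def)
  qed
  have "odem_seq ?K (omult (opow (ovar 1) (m + ?K)) ?g) = odem ?K (odem_seq k (omult (opow (ovar 1) (Suc m + k)) ?g))"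
    by simp
  also have "\<dots> = osum (\<lambda>i. odem ?K (omult (osigma i (hsym (?K - i) (Suc m + i))) (?D i))) {0..<?K}"
    unfolding IH by (rule odem_osum) (simp_all add: ok_fs)
  also have "\<dots> = osum (\<lambda>i. oadd (G i) (T i)) {0..<?K}"
  proof (rule osum_cong)
    fix i assume "i \<in> {0..<?K}"
    then show "odem ?K (omult (osigma i (hsym (?K - i) (Suc m + i))) (?D i)) = oadd (G i) (T i)"
      by (intro step) simp
  qed
  also have "\<dots> = osum G {0..<Suc ?K}"
  proof (rule ext)
    fix x
    have "(\<Sum>i<k. T i x) = 0" by (rule sum.neutral) (simp add: Tz ozero_apply)
    then show "osum (\<lambda>i. oadd (G i) (T i)) {0..<?K} x = osum G {0..<Suc ?K} x"
      by (simp add: osum_apply oadd_apply sum.distrib atLeast0LessThan Tk)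
  qed
  finally show ?case by (simp add: G_def[abs_def])
qed

theorem mainTheorem13:
  fixes n m k :: nat and f :: "'k::field opol"
  assumes char: "(2::'k) \<noteq> 0"
    and n: "1 \<le> n"
    and f: "f \<in> osym (n - 1)"
    and k: "1 \<le> k" "k \<le> n"
  shows "odem_seq (k - 1) (omult (opow (ovar 1) (m + k - 1)) (osigma 1 f)) =
         osum (\<lambda>i. omult (osigma i (hsym (k - i) (m + i))) (odem_seq i (osigma 1 f))) {0..<k}"
proof -
  obtain k' where k': "k = Suc k'" using k by (cases k) auto
  have "k' < n" using k k' by simp
  then show ?thesis using main_aux[OF f, of k' m] k' by simp
qed


end
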